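(* Let $(G,\cdot,D,\star)$ be an invariant probabilistic metric group with identity $e$, where $\star$ is a continuous triangle function. Then $\Pi(G)$ is closed under $\odot$ and $(\Pi(G),\odot,\mathbb D,\star)$ is a complete invariant probabilistic metric group with identity element $\delta_e$.
   Context: A distribution function is a nondecreasing, left-continuous function $F:[-\infty,+\infty]\to[0,1]$ with $F(-\infty)=0$, $F(+\infty)=1$; $\Delta^+$ is the set of distribution functions with $F(0)=0$, ordered pointwise (a complete lattice with maximum $\mathcal H_0$, $\mathcal H_0(t)=0$ for $t\le0$, $1$ for $t>0$). A triangle function is a binary operation $\star$ on $\Delta^+$ that is commutative, associative, nondecreasing in each argument, with $F\star\mathcal H_0=F$. $F_n\xrightarrow{w}F$ means $F_n(t)\to F(t)$ at every continuity point $t\in\mathbb R$ of $F$; $\star$ is continuous if $F_n\star L_n\xrightarrow{w}F\star L$ whenever $F_n\xrightarrow{w}F$, $L_n\xrightarrow{w}L$. A probabilistic metric space $(G,D,\star)$ consists of a set $G$, a triangle function $\star$ and $D:G\times G\to\Delta^+$ with (i) $D(p,q)=\mathcal H_0$ iff $p=q$; (ii) $D(p,q)=D(q,p)$; (iii) $D(p,q)\star D(q,r)\le D(p,r)$. If $(G,\cdot)$ is a group and $D(pr,qr)=D(rp,rq)=D(p,q)$ for all $p,q,r$, it is an invariant probabilistic metric group. A sequence $(z_n)$ is Cauchy if $D(z_n,z_p)\xrightarrow{w}\mathcal H_0$ as $n,p\to\infty$; completeness means every Cauchy sequence has a point $z$ with $D(z_n,z)\xrightarrow{w}\mathcal H_0$.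 A map $f:G\to\Delta^+$ is probabilistic $1$-Lipschitz if $D(x,y)\star f(y)\le f(x)$ for all $x,y$. $\delta_a(y)=D(y,a)$. $\Pi(G)$ is the set of probabilistic $1$-Lipschitz maps $f$ for which there is a Cauchy sequence $(a_n)\subset G$ with $D(a_n,x)\xrightarrow{w}f(x)$ for all $x$. $\mathbb D(f,g)=\sup_{x\in G}f(x)\star g(x)$ for $f,g\in\Pi(G)$. For maps $f,g:G\to\Delta^+$, $(f\odot g)(x)=\sup_{y,z\in G,\ yz=x}f(y)\star g(z)$. *)

theory Defs
  imports "HOL-Library.Extended_Real" "HOL-Algebra.Group"
begin

type_synonym dfun = "ereal \<Rightarrow> real"

definition H0 :: dfun where
  "H0 = (\<lambda>t. if t \<le> 0 then 0 else 1)"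

definition is_df :: "dfun \<Rightarrow> bool" where
  "is_df F \<longleftrightarrow> mono F \<and>
     (\<forall>t::real. continuous (at_left t) (\<lambda>s. F (ereal s))) \<and>
     F (-\<infinity>) = 0 \<and> F \<infinity> = 1"

definition Delta_plus :: "dfun set" where
  "Delta_plus = {F. is_df F \<and> F 0 = 0}"

definition wconv :: "('i \<Rightarrow> dfun) \<Rightarrow> dfun \<Rightarrow> 'i filter \<Rightarrow> bool" where
  "wconv Fs F net \<longleftrightarrow>
     (\<forall>t::real. isCont (\<lambda>s. F (ereal s)) t \<longrightarrow> ((\<lambda>i. Fs i (ereal t)) \<longlongrightarrow> F (ereal t)) net)"

definition triangle_function :: "(dfun \<Rightarrow> dfun \<Rightarrow> dfun) \<Rightarrow> bool" where
  "triangle_function T \<longleftrightarrow>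
     (\<forall>F\<in>Delta_plus. \<forall>L\<in>Delta_plus. T F L \<in> Delta_plus) \<and>
     (\<forall>F\<in>Delta_plus. \<forall>L\<in>Delta_plus. T F L = T L F) \<and>
     (\<forall>F\<in>Delta_plus. \<forall>L\<in>Delta_plus. \<forall>K\<in>Delta_plus. T (T F L) K = T F (T L K)) \<and>
     (\<forall>F\<in>Delta_plus. \<forall>F'\<in>Delta_plus. \<forall>L\<in>Delta_plus. F \<le> F' \<longrightarrow> T F L \<le> T F' L) \<and>
     (\<forall>F\<in>Delta_plus. \<forall>L\<in>Delta_plus. \<forall>L'\<in>Delta_plus. L \<le> L' \<longrightarrow> T F L \<le> T F L') \<and>
     (\<forall>F\<in>Delta_plus. T F H0 = F)"

definition continuous_tf :: "(dfun \<Rightarrow> dfun \<Rightarrow> dfun) \<Rightarrow> bool" where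
  "continuous_tf T \<longleftrightarrow>
     (\<forall>Fs Ls F L. (\<forall>n. Fs n \<in> Delta_plus \<and> Ls n \<in> Delta_plus) \<and> F \<in> Delta_plus \<and> L \<in> Delta_plus \<and>
        wconv Fs F sequentially \<and> wconv Ls L sequentially \<longrightarrow>
        wconv (\<lambda>n. T (Fs n) (Ls n)) (T F L) sequentially)"

definition pm_space :: "'a set \<Rightarrow> ('a \<Rightarrow> 'a \<Rightarrow> dfun) \<Rightarrow> (dfun \<Rightarrow> dfun \<Rightarrow> dfun) \<Rightarrow> bool" where
  "pm_space S D T \<longleftrightarrow> triangle_function T \<and>
     (\<forall>p\<in>S. \<forall>q\<in>S. D p q \<in> Delta_plus) \<and>
     (\<forall>p\<in>S. \<forall>q\<in>S. D p q = H0 \<longleftrightarrow> p = q) \<and>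
     (\<forall>p\<in>S. \<forall>q\<in>S. D p q = D q p) \<and>
     (\<forall>p\<in>S. \<forall>q\<in>S. \<forall>r\<in>S. T (D p q) (D q r) \<le> D p r)"

definition inv_pm_group ::
    "('a, 'b) monoid_scheme \<Rightarrow> ('a \<Rightarrow> 'a \<Rightarrow> dfun) \<Rightarrow> (dfun \<Rightarrow> dfun \<Rightarrow> dfun) \<Rightarrow> bool" where
  "inv_pm_group G D T \<longleftrightarrow> group G \<and> pm_space (carrier G) D T \<and>
     (\<forall>p\<in>carrier G. \<forall>q\<in>carrier G. \<forall>r\<in>carrier G.
        D (p \<otimes>\<^bsub>G\<^esub> r) (q \<otimes>\<^bsub>G\<^esub> r) = D p q \<and> D (r \<otimes>\<^bsub>G\<^esub> p) (r \<otimes>\<^bsub>G\<^esub> q) = D p q)"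

definition pm_cauchy :: "'a set \<Rightarrow> ('a \<Rightarrow> 'a \<Rightarrow> dfun) \<Rightarrow> (nat \<Rightarrow> 'a) \<Rightarrow> bool" where
  "pm_cauchy S D z \<longleftrightarrow> (\<forall>n. z n \<in> S) \<and>
     wconv (\<lambda>(n, p). D (z n) (z p)) H0 (sequentially \<times>\<^sub>F sequentially)"

definition pm_complete :: "'a set \<Rightarrow> ('a \<Rightarrow> 'a \<Rightarrow> dfun) \<Rightarrow> bool" where
  "pm_complete S D \<longleftrightarrow>
     (\<forall>z. pm_cauchy S D z \<longrightarrow> (\<exists>x\<in>S. wconv (\<lambda>n. D (z n) x) H0 sequentially))"

definition dsup :: "dfun set \<Rightarrow> dfun" where
  "dsup A = (\<lambda>t. Sup ((\<lambda>F. F t) ` A))"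

definition prob_lip1 ::
    "'a set \<Rightarrow> ('a \<Rightarrow> 'a \<Rightarrow> dfun) \<Rightarrow> (dfun \<Rightarrow> dfun \<Rightarrow> dfun) \<Rightarrow> ('a \<Rightarrow> dfun) \<Rightarrow> bool" where
  "prob_lip1 S D T f \<longleftrightarrow> (\<forall>x\<in>S. f x \<in> Delta_plus) \<and>
     (\<forall>x\<in>S. \<forall>y\<in>S. T (D x y) (f y) \<le> f x)"

text \<open>Maps G -> Delta_plus are represented as extensional functions on the carrier.\<close>
definition delta_map :: "'a set \<Rightarrow> ('a \<Rightarrow> 'a \<Rightarrow> dfun) \<Rightarrow> 'a \<Rightarrow> ('a \<Rightarrow> dfun)" where
  "delta_map S D a = restrict (\<lambda>y. D y a) S"

definition Pi_set ::
    "'a set \<Rightarrow> ('a \<Rightarrow> 'a \<Rightarrow> dfun) \<Rightarrow> (dfun \<Rightarrow> dfun \<Rightarrow> dfun) \<Rightarrow> ('a \<Rightarrow> dfun) set" where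
  "Pi_set S D T = {f. f \<in> extensional S \<and> prob_lip1 S D T f \<and>
     (\<exists>a. pm_cauchy S D a \<and> (\<forall>x\<in>S. wconv (\<lambda>n. D (a n) x) (f x) sequentially))}"

definition DD ::
    "'a set \<Rightarrow> (dfun \<Rightarrow> dfun \<Rightarrow> dfun) \<Rightarrow> ('a \<Rightarrow> dfun) \<Rightarrow> ('a \<Rightarrow> dfun) \<Rightarrow> dfun" where
  "DD S T f g = dsup {T (f x) (g x) | x. x \<in> S}"

definition odot ::
    "('a, 'b) monoid_scheme \<Rightarrow> (dfun \<Rightarrow> dfun \<Rightarrow> dfun) \<Rightarrow> ('a \<Rightarrow> dfun) \<Rightarrow> ('a \<Rightarrow> dfun) \<Rightarrow> ('a \<Rightarrow> dfun)" where
  "odot G T f g = restrict (\<lambda>x. dsup {T (f y) (g z) | y z.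
        y \<in> carrier G \<and> z \<in> carrier G \<and> y \<otimes>\<^bsub>G\<^esub> z = x}) (carrier G)"

definition Pi_group ::
    "('a, 'b) monoid_scheme \<Rightarrow> ('a \<Rightarrow> 'a \<Rightarrow> dfun) \<Rightarrow> (dfun \<Rightarrow> dfun \<Rightarrow> dfun) \<Rightarrow> ('a \<Rightarrow> dfun) monoid" where
  "Pi_group G D T = \<lparr>carrier = Pi_set (carrier G) D T, mult = odot G T,
      one = delta_map (carrier G) D \<one>\<^bsub>G\<^esub>\<rparr>"

end

theory Submission
  imports Defs "HOL-Probability.Helly_Selection"
begin

lemma DP_df: "F \<in> Delta_plus \<Longrightarrow> is_df F"
  by (simp add: Delta_plus_def)

lemma DP_mono: "F \<in> Delta_plus \<Longrightarrow> mono F"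
  by (simp add: Delta_plus_def is_df_def)

lemma DP_monoD: "F \<in> Delta_plus \<Longrightarrow> x \<le> y \<Longrightarrow> F x \<le> F y"
  using DP_mono monoD by blast

lemma DP_mono_real: "F \<in> Delta_plus \<Longrightarrow> mono (\<lambda>s. F (ereal s))"
  by (auto simp: mono_def intro: DP_monoD)

lemma DP_minf: "F \<in> Delta_plus \<Longrightarrow> F (-\<infinity>) = 0"
  by (simp add: Delta_plus_def is_df_def)

lemma DP_pinf: "F \<in> Delta_plus \<Longrightarrow> F \<infinity> = 1"
  by (simp add: Delta_plus_def is_df_def)

lemma DP_zero: "F \<in> Delta_plus \<Longrightarrow> F 0 = 0"
  by (simp add: Delta_plus_def)

lemma DP_lcont: "F \<in> Delta_plus \<Longrightarrow> continuous (at_left t) (\<lambda>s. F (ereal s))"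
  by (simp add: Delta_plus_def is_df_def)

lemma DP_nonneg: "F \<in> Delta_plus \<Longrightarrow> 0 \<le> F x"
  using DP_monoD[of F "-\<infinity>" x] DP_minf[of F] by auto

lemma DP_le1: "F \<in> Delta_plus \<Longrightarrow> F x \<le> 1"
  using DP_monoD[of F x "\<infinity>"] DP_pinf[of F] by auto

lemma DP_nonpos: "F \<in> Delta_plus \<Longrightarrow> x \<le> 0 \<Longrightarrow> F x = 0"
  using DP_monoD[of F x 0] DP_zero[of F] DP_nonneg[of F x] by auto

lemma H0_pos: "0 < x \<Longrightarrow> H0 x = 1"
  by (simp add: H0_def)

lemma H0_nonpos: "x \<le> 0 \<Longrightarrow> H0 x = 0"
  by (simp add: H0_def)

lemma DP_le_H0: "F \<in> Delta_plus \<Longrightarrow> F \<le> H0"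
  unfolding le_fun_def
  by (metis DP_le1 DP_nonpos H0_def order_refl)

lemma H0_DP: "H0 \<in> Delta_plus"
proof -
  have m: "mono H0" unfolding mono_def H0_def by auto
  have lc: "continuous (at_left t) (\<lambda>s. H0 (ereal s))" for t
  proof (cases "t \<le> 0")
    case True
    have "eventually (\<lambda>s. H0 (ereal s) = 0) (at_left t)"
      unfolding eventually_at_left_field
      using True by (intro exI[of _ "t - 1"]) (auto simp: H0_def)
    then have "((\<lambda>s. H0 (ereal s)) \<longlongrightarrow> 0) (at_left t)"
      by (rule tendsto_eventually)
    then show ?thesis using True by (simp add: continuous_within H0_def)
  next
    case False
    have "eventually (\<lambda>s. H0 (ereal s) = 1) (at_left t)"
      unfolding eventually_at_left_field
      using False by (intro exI[of _ 0]) (auto simp: H0_def)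
    then have "((\<lambda>s. H0 (ereal s)) \<longlongrightarrow> 1) (at_left t)"
      by (rule tendsto_eventually)
    then show ?thesis using False by (simp add: continuous_within H0_def)
  qed
  show ?thesis
    unfolding Delta_plus_def is_df_def using m lc by (auto simp: H0_def)
qed

section \<open>Continuity points are dense\<close>

definition disc :: "dfun \<Rightarrow> real set" where
  "disc F = {t. \<not> isCont (\<lambda>s. F (ereal s)) t}"

lemma disc_countable: "F \<in> Delta_plus \<Longrightarrow> countable (disc F)"
  unfolding disc_def by (rule mono_ctble_discont[OF DP_mono_real])

lemma avoid_countable:
  fixes a b :: real
  assumes "countable C" "a < b"
  shows "\<exists>c. a < c \<and> c < b \<and> c \<notin> C"
  using open_minus_countable[OF assms(1), of "{a<..<b}"] assms(2) by auto

lemma le_off_countable: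
  assumes F: "F \<in> Delta_plus" and G: "mono (\<lambda>s. G (ereal s))" and C: "countable C"
    and le: "\<And>t. t \<notin> C \<Longrightarrow> F (ereal t) \<le> G (ereal t)"
  shows "F (ereal t) \<le> G (ereal t)"
proof (rule ccontr)
  assume "\<not> ?thesis"
  then have lt: "G (ereal t) < F (ereal t)" by simp
  have "((\<lambda>s. F (ereal s)) \<longlongrightarrow> F (ereal t)) (at_left t)"
    using DP_lcont[OF F, of t] by (simp add: continuous_within)
  then have "eventually (\<lambda>s. G (ereal t) < F (ereal s)) (at_left t)"
    using lt order_tendstoD(1) by blast
  then obtain b where b: "b < t" "\<And>s. b < s \<Longrightarrow> s < t \<Longrightarrow> G (ereal t) < F (ereal s)"
    unfolding eventually_at_left_field by blast
  obtain c where c: "b < c" "c < t" "c \<notin> C" using avoid_countable[OF C b(1)] by blast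
  have "F (ereal c) \<le> G (ereal c)" using le c(3) .
  also have "\<dots> \<le> G (ereal t)" using G c(2) by (auto simp: mono_def)
  finally show False using b(2)[OF c(1,2)] by simp
qed

lemma le_DP_ereal:
  assumes "F \<in> Delta_plus" "G \<in> Delta_plus" "\<And>t. F (ereal t) \<le> G (ereal t)"
  shows "F \<le> G"
proof (rule le_funI)
  fix x show "F x \<le> G x"
    using assms by (cases x) (auto simp: DP_minf DP_pinf)
qed

lemma wconv_const: "wconv (\<lambda>i. F) F net"
  by (simp add: wconv_def)

lemma wconv_compose:
  assumes "wconv Fs F F1" "filterlim g F1 F2"
  shows "wconv (\<lambda>i. Fs (g i)) F F2"
  using assms unfolding wconv_def by (auto intro: filterlim_compose)

lemma wconv_subseq:
  assumes "wconv Fs F sequentially" "strict_mono \<sigma>"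
  shows "wconv (\<lambda>i. Fs (\<sigma> i)) F sequentially"
  using wconv_compose[OF assms(1) filterlim_subseq[OF assms(2)]] .

lemma wconv_le_gen:
  assumes Fs: "wconv Fs F sequentially" and Gs: "wconv Gs G sequentially"
    and F: "F \<in> Delta_plus" and G: "G \<in> Delta_plus"
    and ev: "eventually (\<lambda>n. \<forall>t::real. Fs n (ereal t) \<le> Gs n (ereal t)) sequentially"
  shows "F \<le> G"
proof -
  have "F (ereal t) \<le> G (ereal t)" for t
  proof (rule le_off_countable[OF F DP_mono_real[OF G], of "disc F \<union> disc G"])
    show "countable (disc F \<union> disc G)" using disc_countable F G by auto
    fix t assume "t \<notin> disc F \<union> disc G"
    then have "isCont (\<lambda>s. F (ereal s)) t" "isCont (\<lambda>s. G (ereal s)) t"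
      by (auto simp: disc_def)
    then have "(\<lambda>n. Fs n (ereal t)) \<longlonglongrightarrow> F (ereal t)" "(\<lambda>n. Gs n (ereal t)) \<longlonglongrightarrow> G (ereal t)"
      using Fs Gs by (auto simp: wconv_def)
    then show "F (ereal t) \<le> G (ereal t)"
      by (rule LIMSEQ_le) (use ev in \<open>auto simp: eventually_sequentially\<close>)
  qed
  then show ?thesis using le_DP_ereal F G by blast
qed

lemma wconv_le:
  assumes "wconv Fs F sequentially" "wconv Gs G sequentially"
    "F \<in> Delta_plus" "G \<in> Delta_plus" "\<And>n. Fs n \<le> Gs n"
  shows "F \<le> G"
  using assms by (intro wconv_le_gen) (auto simp: le_fun_def)

lemma wconv_le_const:
  assumes "wconv Fs F sequentially" "F \<in> Delta_plus" "G \<in> Delta_plus" "\<And>n. Fs n \<le> G"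
  shows "F \<le> G"
  using wconv_le[OF assms(1) wconv_const assms(2,3)] assms(4) by blast

lemma wconv_ge_const:
  assumes "wconv Fs F sequentially" "F \<in> Delta_plus" "G \<in> Delta_plus" "\<And>n. G \<le> Fs n"
  shows "G \<le> F"
  using wconv_le[OF wconv_const assms(1) assms(3,2)] assms(4) by blast

lemma wconv_le_mono:
  assumes Fs: "wconv Fs F sequentially" and F: "F \<in> Delta_plus"
    and G: "mono (\<lambda>s. G (ereal s))" and le: "\<And>n t. Fs n (ereal t) \<le> G (ereal t)"
  shows "F (ereal t) \<le> G (ereal t)"
proof (rule le_off_countable[OF F G disc_countable[OF F]])
  fix t assume "t \<notin> disc F"
  then have "(\<lambda>n. Fs n (ereal t)) \<longlonglongrightarrow> F (ereal t)" using Fs by (auto simp: wconv_def disc_def)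
  then show "F (ereal t) \<le> G (ereal t)"
    by (rule LIMSEQ_le_const2) (use le in auto)
qed

lemma wconv_unique:
  assumes "wconv Fs F sequentially" "wconv Fs G sequentially" "F \<in> Delta_plus" "G \<in> Delta_plus"
  shows "F = G"
  using wconv_le[OF assms(1,2,3,4)] wconv_le[OF assms(2,1,4,3)] by auto

lemma wconv_ge_pt:
  assumes Fs: "wconv Fs F sequentially" and F: "F \<in> Delta_plus"
    and Fsd: "\<And>n. Fs n \<in> Delta_plus" and st: "s0 < t"
    and ev: "eventually (\<lambda>n. c \<le> Fs n (ereal s0)) sequentially"
  shows "c \<le> F (ereal t)"
proof -
  obtain s where s: "s0 < s" "s < t" "s \<notin> disc F"
    using avoid_countable[OF disc_countable[OF F] st] by blast
  have "(\<lambda>n. Fs n (ereal s)) \<longlonglongrightarrow> F (ereal s)" using Fs s(3) by (auto simp: wconv_def disc_def)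
  moreover have "eventually (\<lambda>n. c \<le> Fs n (ereal s)) sequentially"
  proof -
    have m: "Fs n (ereal s0) \<le> Fs n (ereal s)" for n
      using DP_monoD[OF Fsd, of "ereal s0" "ereal s"] s(1) by simp
    show ?thesis using ev by eventually_elim (rule order_trans[OF _ m])
  qed
  ultimately have "c \<le> F (ereal s)" by (rule tendsto_lowerbound) simp
  also have "\<dots> \<le> F (ereal t)" using DP_monoD[OF F] s(2) by simp
  finally show ?thesis .
qed

lemma tendsto1_iff:
  assumes "\<And>i. f i \<le> (1::real)"
  shows "(f \<longlongrightarrow> 1) net \<longleftrightarrow> (\<forall>c<1. eventually (\<lambda>i. c < f i) net)"
proof -
  have "eventually (\<lambda>i. f i < u) net" if "1 < u" for u
    using assms that by (intro always_eventually) (auto intro: le_less_trans)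
  then show ?thesis unfolding order_tendsto_iff by auto
qed

lemma wconv_H0_iff:
  assumes "\<And>i. Fs i \<in> Delta_plus"
  shows "wconv Fs H0 net \<longleftrightarrow> (\<forall>t>0. \<forall>c<1. eventually (\<lambda>i. c < Fs i (ereal t)) net)"
proof
  assume w: "wconv Fs H0 net"
  show "\<forall>t>0. \<forall>c<1. eventually (\<lambda>i. c < Fs i (ereal t)) net"
  proof (intro allI impI)
    fix t c :: real assume t: "0 < t" and c: "c < 1"
    have "eventually (\<lambda>s. s \<in> {0<..}) (nhds t)"
      using eventually_nhds_in_open[of "{0<..}" t] t by simp
    then have "eventually (\<lambda>s. H0 (ereal s) = (\<lambda>_. 1::real) s) (nhds t)"
      by (rule eventually_mono) (simp add: H0_def)
    then have "isCont (\<lambda>s. H0 (ereal s)) t \<longleftrightarrow> isCont (\<lambda>_. 1::real) t"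
      by (rule isCont_cong)
    then have "isCont (\<lambda>s. H0 (ereal s)) t" by simp
    then have "((\<lambda>i. Fs i (ereal t)) \<longlongrightarrow> 1) net"
      using w t by (auto simp: wconv_def H0_def)
    then show "eventually (\<lambda>i. c < Fs i (ereal t)) net"
      using c order_tendstoD(1) by blast
  qed
next
  assume r: "\<forall>t>0. \<forall>c<1. eventually (\<lambda>i. c < Fs i (ereal t)) net"
  show "wconv Fs H0 net"
    unfolding wconv_def
  proof (intro allI impI)
    fix t :: real
    show "((\<lambda>i. Fs i (ereal t)) \<longlongrightarrow> H0 (ereal t)) net"
    proof (cases "t \<le> 0")
      case True
      then show ?thesis using DP_nonpos[OF assms] by (simp add: H0_def)
    next
      case False
      then have h: "H0 (ereal t) = 1" by (simp add: H0_def)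
      have "((\<lambda>i. Fs i (ereal t)) \<longlongrightarrow> 1) net"
        using tendsto1_iff[of "\<lambda>i. Fs i (ereal t)" net] DP_le1[OF assms] r False by auto
      then show ?thesis using h by simp
    qed
  qed
qed

lemma wconv_H0_squeeze:
  assumes "\<And>i. Fs i \<in> Delta_plus" "\<And>i. Gs i \<in> Delta_plus"
    "wconv Gs H0 net" "eventually (\<lambda>i. Gs i \<le> Fs i) net"
  shows "wconv Fs H0 net"
  unfolding wconv_H0_iff[OF assms(1)]
proof (intro allI impI)
  fix t c :: real assume "0 < t" "c < 1"
  then have "eventually (\<lambda>i. c < Gs i (ereal t)) net"
    using assms(3) unfolding wconv_H0_iff[OF assms(2)] by blast
  then show "eventually (\<lambda>i. c < Fs i (ereal t)) net"
    using assms(4) by eventually_elim (auto dest: le_funD intro: less_le_trans)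
qed



lemma le_off_countable_real:
  fixes f g :: "real \<Rightarrow> real"
  assumes f: "continuous (at_left t) f" and g: "mono g" and C: "countable C" and a: "a < t"
    and le: "\<And>s. a < s \<Longrightarrow> s < t \<Longrightarrow> s \<notin> C \<Longrightarrow> f s \<le> g s"
  shows "f t \<le> g t"
proof (rule ccontr)
  assume "\<not> ?thesis"
  then have lt: "g t < f t" by simp
  have "(f \<longlongrightarrow> f t) (at_left t)" using f by (simp add: continuous_within)
  then have "eventually (\<lambda>s. g t < f s) (at_left t)"
    using lt order_tendstoD(1) by blast
  then obtain b where b: "b < t" "\<And>s. b < s \<Longrightarrow> s < t \<Longrightarrow> g t < f s"
    unfolding eventually_at_left_field by blast
  obtain c where c: "max a b < c" "c < t" "c \<notin> C"
    using avoid_countable[OF C, of "max a b" t] a b(1) by auto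
  have "f c \<le> g c" using le c by auto
  also have "\<dots> \<le> g t" using g c(2) by (auto simp: mono_def)
  finally show False using b(2)[of c] c by simp
qed

lemma le_off_countable_real':
  fixes f g :: "real \<Rightarrow> real"
  assumes f: "continuous (at_left t) f" and g: "mono g" and C: "countable C"
    and le: "\<And>s. s \<notin> C \<Longrightarrow> f s \<le> g s"
  shows "f t \<le> g t"
  using le_off_countable_real[OF f g C, of "t - 1"] le by auto

section \<open>Helly selection for Delta_plus\<close>

lemma helly_DP:
  fixes Fs :: "nat \<Rightarrow> dfun"
  assumes Fs: "\<And>n. Fs n \<in> Delta_plus"
  shows "\<exists>\<sigma> K. strict_mono \<sigma> \<and> K \<in> Delta_plus \<and> wconv (\<lambda>n. Fs (\<sigma> n)) K sequentially"
proof -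
  define f where "f n x = - Fs n (ereal (- x))" for n x
  have rc: "continuous (at_right x) (f n)" for n x
  proof -
    have "((\<lambda>s. Fs n (ereal s)) \<longlongrightarrow> Fs n (ereal (-x))) (at_left (-x))"
      using DP_lcont[OF Fs[of n], of "-x"] by (simp add: continuous_within)
    then have "((\<lambda>y. Fs n (ereal (- y))) \<longlongrightarrow> Fs n (ereal (-x))) (at_right x)"
      unfolding filterlim_at_left_to_right by simp
    then have "((\<lambda>y. - Fs n (ereal (- y))) \<longlongrightarrow> - Fs n (ereal (-x))) (at_right x)"
      by (rule tendsto_minus)
    moreover have "f n = (\<lambda>y. - Fs n (ereal (-y)))" by (simp add: fun_eq_iff f_def)
    ultimately show ?thesis by (simp add: continuous_within)
  qed
  have mo: "mono (f n)" for n
    unfolding mono_def f_def using DP_monoD[OF Fs] by simp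
  have bd: "\<bar>f n x\<bar> \<le> 1" for n x
    unfolding f_def using DP_nonneg[OF Fs] DP_le1[OF Fs] by (simp add: abs_le_iff)
  obtain \<sigma> Fl where s: "strict_mono \<sigma>" and Flrc: "\<And>x. continuous (at_right x) Fl"
    and Flm: "mono Fl"
    and Flc: "\<And>x. isCont Fl x \<Longrightarrow> (\<lambda>n. f (\<sigma> n) x) \<longlonglongrightarrow> Fl x"
    using Helly_selection[where f=f and M=1, OF rc mo bd] by blast
  define Kr where "Kr t = - Fl (- t)" for t
  have Krm: "mono Kr" using Flm unfolding Kr_def mono_def by simp
  have Krlc: "continuous (at_left t) Kr" for t
  proof -
    have "(Fl \<longlongrightarrow> Fl (-t)) (at_right (-t))" using Flrc[of "-t"] by (simp add: continuous_within)
    then have "((\<lambda>y. Fl (- y)) \<longlongrightarrow> Fl (-t)) (at_left t)"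
      using filterlim_at_left_to_right[of "\<lambda>y. Fl (- y)" "nhds (Fl (-t))" t] by simp
    then show ?thesis unfolding Kr_def continuous_within by (intro tendsto_minus)
  qed
  have Krc: "(\<lambda>n. Fs (\<sigma> n) (ereal t)) \<longlonglongrightarrow> Kr t" if "isCont Kr t" for t
  proof -
    have eq: "Fl = (\<lambda>x. - Kr (- x))" by (simp add: Kr_def fun_eq_iff)
    have "isCont (\<lambda>x. Kr (- x)) (-t)"
      using that by (intro isCont_o2[where f="\<lambda>x. - x" and a="-t" and g=Kr]) (auto intro!: continuous_intros)
    then have "isCont (\<lambda>x. - Kr (- x)) (-t)" by (intro continuous_intros)
    then have "isCont Fl (-t)" using eq by simp
    then have "(\<lambda>n. f (\<sigma> n) (-t)) \<longlonglongrightarrow> Fl (-t)" by (rule Flc)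
    then have "(\<lambda>n. - f (\<sigma> n) (-t)) \<longlonglongrightarrow> - Fl (-t)" by (rule tendsto_minus)
    then show ?thesis by (simp add: f_def Kr_def)
  qed
  define Cd where "Cd = {t. \<not> isCont Kr t}"
  have Cdc: "countable Cd" unfolding Cd_def by (rule mono_ctble_discont[OF Krm])
  have Kr0: "0 \<le> Kr t" for t
  proof (rule le_off_countable_real'[OF _ Krm Cdc])
    show "continuous (at_left t) (\<lambda>_. 0::real)" by simp
    fix s assume "s \<notin> Cd"
    then have "(\<lambda>n. Fs (\<sigma> n) (ereal s)) \<longlonglongrightarrow> Kr s" using Krc by (auto simp: Cd_def)
    then show "0 \<le> Kr s"
      by (rule tendsto_lowerbound) (auto intro!: always_eventually DP_nonneg[OF Fs])
  qed
  have Kr1: "Kr t \<le> 1" for t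
  proof (rule le_off_countable_real'[OF Krlc _ Cdc])
    show "mono (\<lambda>_. 1::real)" by (simp add: mono_def)
    fix s assume "s \<notin> Cd"
    then have "(\<lambda>n. Fs (\<sigma> n) (ereal s)) \<longlonglongrightarrow> Kr s" using Krc by (auto simp: Cd_def)
    then show "Kr s \<le> 1"
      by (rule tendsto_upperbound) (auto intro!: always_eventually DP_le1[OF Fs])
  qed
  have Kr00: "Kr 0 \<le> 0"
  proof (rule le_off_countable_real[OF Krlc _ Cdc, where a="-1" and g="\<lambda>_. 0"])
    show "mono (\<lambda>_. 0::real)" by (simp add: mono_def)
    fix s :: real assume "-1 < s" "s < 0" "s \<notin> Cd"
    then have "(\<lambda>n. Fs (\<sigma> n) (ereal s)) \<longlonglongrightarrow> Kr s" using Krc by (auto simp: Cd_def)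
    moreover have "(\<lambda>n. Fs (\<sigma> n) (ereal s)) = (\<lambda>n. 0)"
      using DP_nonpos[OF Fs] \<open>s < 0\<close> by (simp add: fun_eq_iff)
    ultimately have "(\<lambda>n. 0::real) \<longlonglongrightarrow> Kr s" by simp
    then have "Kr s = 0" using LIMSEQ_unique[OF _ tendsto_const] by metis
    then show "Kr s \<le> 0" by simp
  qed simp
  define K :: dfun where "K x = (if x = \<infinity> then 1 else if x = -\<infinity> then 0 else Kr (real_of_ereal x))" for x
  have Ke: "K (ereal t) = Kr t" for t by (simp add: K_def)
  have Km: "mono K"
    unfolding mono_def
  proof (intro allI impI)
    fix x y :: ereal assume "x \<le> y"
    then show "K x \<le> K y"
      by (cases x; cases y) (auto simp: K_def Kr0 Kr1 intro: monoD[OF Krm])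
  qed
  have KD: "K \<in> Delta_plus"
    unfolding Delta_plus_def is_df_def
    using Km Krlc Kr0[of 0] Kr00 by (auto simp: Ke zero_ereal_def) (auto simp: K_def)
  have "wconv (\<lambda>n. Fs (\<sigma> n)) K sequentially"
    unfolding wconv_def Ke using Krc by (simp add: Ke[abs_def])
  then show ?thesis using s KD by blast
qed

lemma wconv_subsub:
  fixes Fs :: "nat \<Rightarrow> dfun"
  assumes Fs: "\<And>n. Fs n \<in> Delta_plus" and F: "F \<in> Delta_plus"
    and H: "\<And>\<sigma> K. strict_mono \<sigma> \<Longrightarrow> K \<in> Delta_plus \<Longrightarrow> wconv (\<lambda>n. Fs (\<sigma> n)) K sequentially \<Longrightarrow> K = F"
  shows "wconv Fs F sequentially"
  unfolding wconv_def
proof (intro allI impI)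
  fix t assume ct: "isCont (\<lambda>s. F (ereal s)) t"
  show "(\<lambda>n. Fs n (ereal t)) \<longlonglongrightarrow> F (ereal t)"
  proof (rule ccontr)
    assume "\<not> ?thesis"
    then obtain e where e: "0 < e" "\<not> eventually (\<lambda>n. dist (Fs n (ereal t)) (F (ereal t)) < e) sequentially"
      unfolding tendsto_iff by blast
    then have "infinite {n. \<not> dist (Fs n (ereal t)) (F (ereal t)) < e}"
      unfolding infinite_nat_iff_unbounded_le eventually_sequentially by auto
    then obtain r :: "nat \<Rightarrow> nat" where r: "strict_mono r" "\<And>n. \<not> dist (Fs (r n) (ereal t)) (F (ereal t)) < e"
      using infinite_enumerate by blast
    obtain \<sigma> K where s: "strict_mono \<sigma>" "K \<in> Delta_plus" "wconv (\<lambda>n. Fs (r (\<sigma> n))) K sequentially"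
      using helly_DP[of "\<lambda>n. Fs (r n)"] Fs by blast
    have "strict_mono (r \<circ> \<sigma>)" using r(1) s(1) by (rule strict_mono_o)
    then have "K = F" using H[of "r \<circ> \<sigma>" K] s by (simp add: comp_def)
    then have "(\<lambda>n. Fs (r (\<sigma> n)) (ereal t)) \<longlonglongrightarrow> F (ereal t)"
      using s(3) ct by (auto simp: wconv_def)
    then have "eventually (\<lambda>n. dist (Fs (r (\<sigma> n)) (ereal t)) (F (ereal t)) < e) sequentially"
      by (rule tendstoD[OF _ e(1)])
    then obtain N where "\<And>n. N \<le> n \<Longrightarrow> dist (Fs (r (\<sigma> n)) (ereal t)) (F (ereal t)) < e"
      unfolding eventually_sequentially by blast
    then show False using r(2)[of "\<sigma> N"] by simp
  qed
qed

lemma wconv_exists: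
  fixes Fs :: "nat \<Rightarrow> dfun"
  assumes Fs: "\<And>n. Fs n \<in> Delta_plus"
    and H: "\<And>\<sigma>1 \<sigma>2 K1 K2. strict_mono \<sigma>1 \<Longrightarrow> strict_mono \<sigma>2 \<Longrightarrow> K1 \<in> Delta_plus \<Longrightarrow> K2 \<in> Delta_plus
       \<Longrightarrow> wconv (\<lambda>n. Fs (\<sigma>1 n)) K1 sequentially \<Longrightarrow> wconv (\<lambda>n. Fs (\<sigma>2 n)) K2 sequentially \<Longrightarrow> K1 \<le> K2"
  shows "\<exists>K\<in>Delta_plus. wconv Fs K sequentially"
proof -
  obtain \<sigma>0 K0 where s0: "strict_mono \<sigma>0" "K0 \<in> Delta_plus" "wconv (\<lambda>n. Fs (\<sigma>0 n)) K0 sequentially"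
    using helly_DP[of Fs, OF Fs] by blast
  have "wconv Fs K0 sequentially"
  proof (rule wconv_subsub[OF Fs s0(2)])
    fix \<sigma> K assume "strict_mono \<sigma>" "K \<in> Delta_plus" "wconv (\<lambda>n. Fs (\<sigma> n)) K sequentially"
    then show "K = K0" using H[OF _ s0(1) _ s0(2) _ s0(3)] H[OF s0(1) _ s0(2) _ s0(3)] by (blast intro: antisym)
  qed
  then show ?thesis using s0(2) by blast
qed



locale pmg =
  fixes G :: "('a, 'b) monoid_scheme" (structure)
    and D :: "'a \<Rightarrow> 'a \<Rightarrow> dfun"
    and T :: "dfun \<Rightarrow> dfun \<Rightarrow> dfun"
  assumes ipg: "inv_pm_group G D T"
    and ctf: "continuous_tf T"
begin

lemma grp: "group G" using ipg by (simp add: inv_pm_group_def)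

sublocale group G by (rule grp)

abbreviation "S \<equiv> carrier G"

lemma pms: "pm_space S D T" using ipg by (simp add: inv_pm_group_def)

lemma tf: "triangle_function T" using pms by (simp add: pm_space_def)

lemma tf1: "\<forall>F\<in>Delta_plus. \<forall>L\<in>Delta_plus. T F L \<in> Delta_plus"
  using tf unfolding triangle_function_def by (rule conjunct1)
lemma tf2: "\<forall>F\<in>Delta_plus. \<forall>L\<in>Delta_plus. T F L = T L F"
  using tf unfolding triangle_function_def by (elim conjE)
lemma tf3: "\<forall>F\<in>Delta_plus. \<forall>L\<in>Delta_plus. \<forall>K\<in>Delta_plus. T (T F L) K = T F (T L K)"
  using tf unfolding triangle_function_def by (elim conjE)
lemma tf4: "\<forall>F\<in>Delta_plus. \<forall>F'\<in>Delta_plus. \<forall>L\<in>Delta_plus. F \<le> F' \<longrightarrow> T F L \<le> T F' L"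
  using tf unfolding triangle_function_def by (elim conjE)
lemma tf5: "\<forall>F\<in>Delta_plus. \<forall>L\<in>Delta_plus. \<forall>L'\<in>Delta_plus. L \<le> L' \<longrightarrow> T F L \<le> T F L'"
  using tf unfolding triangle_function_def by (elim conjE)
lemma tf6: "\<forall>F\<in>Delta_plus. T F H0 = F"
  using tf unfolding triangle_function_def by (elim conjE)

lemma Tp: "F \<in> Delta_plus \<Longrightarrow> L \<in> Delta_plus \<Longrightarrow> T F L \<in> Delta_plus"
  using tf1 by blast

lemma Tcomm: "F \<in> Delta_plus \<Longrightarrow> L \<in> Delta_plus \<Longrightarrow> T F L = T L F"
  using tf2 by blast

lemma Tassoc: "F \<in> Delta_plus \<Longrightarrow> L \<in> Delta_plus \<Longrightarrow> K \<in> Delta_plus \<Longrightarrow> T (T F L) K = T F (T L K)"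
  using tf3 by blast

lemma Tmono: "F \<in> Delta_plus \<Longrightarrow> F' \<in> Delta_plus \<Longrightarrow> L \<in> Delta_plus \<Longrightarrow> L' \<in> Delta_plus
  \<Longrightarrow> F \<le> F' \<Longrightarrow> L \<le> L' \<Longrightarrow> T F L \<le> T F' L'"
proof -
  assume a: "F \<in> Delta_plus" "F' \<in> Delta_plus" "L \<in> Delta_plus" "L' \<in> Delta_plus" "F \<le> F'" "L \<le> L'"
  have "T F L \<le> T F' L" using tf4 a by blast
  also have "\<dots> \<le> T F' L'" using tf5 a by blast
  finally show ?thesis .
qed

lemma TH0r: "F \<in> Delta_plus \<Longrightarrow> T F H0 = F"
  using tf6 by blast

lemma TH0l: "F \<in> Delta_plus \<Longrightarrow> T H0 F = F"
  using TH0r Tcomm H0_DP by metis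

lemma Tcont:
  fixes Fs Ls :: "nat \<Rightarrow> dfun"
  assumes "\<And>n. Fs n \<in> Delta_plus" "\<And>n. Ls n \<in> Delta_plus" "F \<in> Delta_plus" "L \<in> Delta_plus"
    "wconv Fs F sequentially" "wconv Ls L sequentially"
  shows "wconv (\<lambda>n. T (Fs n) (Ls n)) (T F L) sequentially"
  using ctf assms unfolding continuous_tf_def by blast

lemma Dp: "p \<in> S \<Longrightarrow> q \<in> S \<Longrightarrow> D p q \<in> Delta_plus"
  using pms by (simp add: pm_space_def)

lemma Dself: "p \<in> S \<Longrightarrow> D p p = H0"
  using pms by (simp add: pm_space_def)

lemma Dsym: "p \<in> S \<Longrightarrow> q \<in> S \<Longrightarrow> D p q = D q p"
  using pms by (simp add: pm_space_def)

lemma Dtri: "p \<in> S \<Longrightarrow> q \<in> S \<Longrightarrow> r \<in> S \<Longrightarrow> T (D p q) (D q r) \<le> D p r"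
  using pms by (simp add: pm_space_def)

lemma Dr: "p \<in> S \<Longrightarrow> q \<in> S \<Longrightarrow> r \<in> S \<Longrightarrow> D (p \<otimes> r) (q \<otimes> r) = D p q"
  using ipg by (simp add: inv_pm_group_def)

lemma Dl: "p \<in> S \<Longrightarrow> q \<in> S \<Longrightarrow> r \<in> S \<Longrightarrow> D (r \<otimes> p) (r \<otimes> q) = D p q"
  using ipg by (simp add: inv_pm_group_def)

lemma Dmul: "a \<in> S \<Longrightarrow> b \<in> S \<Longrightarrow> y \<in> S \<Longrightarrow> z \<in> S \<Longrightarrow> T (D a y) (D b z) \<le> D (a \<otimes> b) (y \<otimes> z)"
  using Dtri[of "a \<otimes> b" "y \<otimes> b" "y \<otimes> z"] Dr[of a y b] Dl[of b z y] by simp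

section \<open>Uniform continuity at H0\<close>

lemma T_H0_unif:
  assumes t: "0 < t" and c: "c < 1"
  shows "\<exists>s>0. \<exists>b<1. \<forall>F L. F \<in> Delta_plus \<longrightarrow> L \<in> Delta_plus \<longrightarrow> b < F (ereal s) \<longrightarrow> b < L (ereal s)
     \<longrightarrow> c < T F L (ereal t)"
proof (rule ccontr)
  assume neg: "\<not> ?thesis"
  have "\<forall>n::nat. \<exists>F L. F \<in> Delta_plus \<and> L \<in> Delta_plus \<and> 1 - inverse (real (Suc n)) < F (ereal (inverse (real (Suc n))))
     \<and> 1 - inverse (real (Suc n)) < L (ereal (inverse (real (Suc n)))) \<and> \<not> c < T F L (ereal t)"
  proof
    fix n :: nat
    show "\<exists>F L. F \<in> Delta_plus \<and> L \<in> Delta_plus \<and> 1 - inverse (real (Suc n)) < F (ereal (inverse (real (Suc n))))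
     \<and> 1 - inverse (real (Suc n)) < L (ereal (inverse (real (Suc n)))) \<and> \<not> c < T F L (ereal t)"
    proof (rule ccontr)
      assume nF: "\<not> ?thesis"
      have pos: "0 < inverse (real (Suc n))" "1 - inverse (real (Suc n)) < 1" by auto
      have "\<forall>F L. F \<in> Delta_plus \<longrightarrow> L \<in> Delta_plus \<longrightarrow> 1 - inverse (real (Suc n)) < F (ereal (inverse (real (Suc n))))
         \<longrightarrow> 1 - inverse (real (Suc n)) < L (ereal (inverse (real (Suc n)))) \<longrightarrow> c < T F L (ereal t)"
        using nF by blast
      then show False using neg pos by blast
    qed
  qed
  then obtain Fs Ls where FL: "\<And>n. Fs n \<in> Delta_plus" "\<And>n. Ls n \<in> Delta_plus"
    "\<And>n. 1 - inverse (real (Suc n)) < Fs n (ereal (inverse (real (Suc n))))"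
    "\<And>n. 1 - inverse (real (Suc n)) < Ls n (ereal (inverse (real (Suc n))))"
    "\<And>n. \<not> c < T (Fs n) (Ls n) (ereal t)"
    by metis
  have conv: "wconv Hs H0 sequentially"
    if H: "\<And>n. Hs n \<in> Delta_plus" "\<And>n. 1 - inverse (real (Suc n)) < Hs n (ereal (inverse (real (Suc n))))"
    for Hs :: "nat \<Rightarrow> dfun"
    unfolding wconv_H0_iff[OF H(1)]
  proof (intro allI impI)
    fix t' c' :: real assume "0 < t'" "c' < 1"
    then have "0 < min t' (1 - c')" by simp
    then obtain N where N: "inverse (real (Suc N)) < min t' (1 - c')"
      using reals_Archimedean by blast
    show "eventually (\<lambda>n. c' < Hs n (ereal t')) sequentially"
      unfolding eventually_sequentially
    proof (intro exI allI impI)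
      fix n assume "N \<le> n"
      then have le: "inverse (real (Suc n)) \<le> inverse (real (Suc N))"
        by (simp add: le_imp_inverse_le)
      have N1: "inverse (real (Suc N)) < t'" and N2: "inverse (real (Suc N)) < 1 - c'"
      using N by auto
    have "c' < 1 - inverse (real (Suc n))" using N2 le by linarith
      also have "\<dots> < Hs n (ereal (inverse (real (Suc n))))" using H(2) .
      also have "\<dots> \<le> Hs n (ereal t')"
        using DP_monoD[OF H(1)[of n], of "ereal (inverse (real (Suc n)))" "ereal t'"] N1 le
        by (simp del: of_nat_Suc)
      finally show "c' < Hs n (ereal t')" .
    qed
  qed
  have "wconv (\<lambda>n. T (Fs n) (Ls n)) (T H0 H0) sequentially"
    using Tcont[OF FL(1,2) H0_DP H0_DP conv[OF FL(1,3)] conv[OF FL(2,4)]] .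
  then have "wconv (\<lambda>n. T (Fs n) (Ls n)) H0 sequentially" using TH0r[OF H0_DP] by simp
  then have "eventually (\<lambda>n. c < T (Fs n) (Ls n) (ereal t)) sequentially"
    using wconv_H0_iff[of "\<lambda>n. T (Fs n) (Ls n)"] Tp FL t c by blast
  then show False using FL(5) by (auto simp: eventually_sequentially)
qed

lemma T_H0_lim:
  fixes Fs Ls :: "'i \<Rightarrow> dfun"
  assumes Fs: "\<And>i. Fs i \<in> Delta_plus" and Ls: "\<And>i. Ls i \<in> Delta_plus"
    and "wconv Fs H0 net" "wconv Ls H0 net"
  shows "wconv (\<lambda>i. T (Fs i) (Ls i)) H0 net"
  unfolding wconv_H0_iff[OF Tp[OF Fs Ls]]
proof (intro allI impI)
  fix t c :: real assume "0 < t" "c < 1"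
  then obtain s b where sb: "0 < s" "b < 1" and
    H: "\<And>F L. F \<in> Delta_plus \<Longrightarrow> L \<in> Delta_plus \<Longrightarrow> b < F (ereal s) \<Longrightarrow> b < L (ereal s) \<Longrightarrow> c < T F L (ereal t)"
    using T_H0_unif by metis
  have "eventually (\<lambda>i. b < Fs i (ereal s)) net" "eventually (\<lambda>i. b < Ls i (ereal s)) net"
    using assms(3,4) sb unfolding wconv_H0_iff[OF Fs] wconv_H0_iff[OF Ls] by auto
  then show "eventually (\<lambda>i. c < T (Fs i) (Ls i) (ereal t)) net"
    by eventually_elim (rule H[OF Fs Ls])
qed


end


context pmg
begin

definition wit :: "('a \<Rightarrow> dfun) \<Rightarrow> (nat \<Rightarrow> 'a) \<Rightarrow> bool" where
  "wit f a \<longleftrightarrow> pm_cauchy S D a \<and> (\<forall>x\<in>S. wconv (\<lambda>n. D (a n) x) (f x) sequentially)"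

abbreviation "PI \<equiv> Pi_set S D T"

lemma wit_in: "wit f a \<Longrightarrow> a n \<in> S"
  by (simp add: wit_def pm_cauchy_def)

lemma wit_lim: "wit f a \<Longrightarrow> x \<in> S \<Longrightarrow> wconv (\<lambda>n. D (a n) x) (f x) sequentially"
  by (simp add: wit_def)

lemma wit_cauchy: "wit f a \<Longrightarrow> pm_cauchy S D a"
  by (simp add: wit_def)

lemma PI_ext: "f \<in> PI \<Longrightarrow> f \<in> extensional S"
  by (simp add: Pi_set_def)

lemma PI_DP: "f \<in> PI \<Longrightarrow> x \<in> S \<Longrightarrow> f x \<in> Delta_plus"
  by (simp add: Pi_set_def prob_lip1_def)

lemma PI_lip: "f \<in> PI \<Longrightarrow> x \<in> S \<Longrightarrow> y \<in> S \<Longrightarrow> T (D x y) (f y) \<le> f x"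
  by (simp add: Pi_set_def prob_lip1_def)

lemma PI_wit: "f \<in> PI \<Longrightarrow> \<exists>a. wit f a"
  by (auto simp: Pi_set_def wit_def)

lemma PI_wit2: "f \<in> PI \<Longrightarrow> g \<in> PI \<Longrightarrow> \<exists>a b. wit f a \<and> wit g b"
  using PI_wit by blast

lemma PI_wit3: "f \<in> PI \<Longrightarrow> g \<in> PI \<Longrightarrow> h \<in> PI \<Longrightarrow> \<exists>a b c. wit f a \<and> wit g b \<and> wit h c"
  using PI_wit by blast

lemma PiI:
  assumes ext: "f \<in> extensional S" and fD: "\<And>x. x \<in> S \<Longrightarrow> f x \<in> Delta_plus" and w: "wit f a"
  shows "f \<in> PI"
proof -
  have lip: "T (D x y) (f y) \<le> f x" if xy: "x \<in> S" "y \<in> S" for x y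
  proof -
    have "wconv (\<lambda>n. T (D (a n) y) (D y x)) (T (f y) (D y x)) sequentially"
      by (rule Tcont) (use xy w in \<open>auto intro: Dp wit_in fD wit_lim wconv_const\<close>)
    moreover have "T (D (a n) y) (D y x) \<le> D (a n) x" for n
      using Dtri[of "a n" y x] xy wit_in[OF w] by blast
    ultimately have "T (f y) (D y x) \<le> f x"
      using wconv_le[OF _ wit_lim[OF w xy(1)]] xy fD Dp Tp by blast
    then show ?thesis using Tcomm Dsym xy fD Dp by metis
  qed
  show ?thesis using ext fD lip w unfolding Pi_set_def prob_lip1_def wit_def by blast
qed

lemma PI_eq:
  assumes "f \<in> PI" "g \<in> PI" "wit f a" "wit g a"
  shows "f = g"
proof (rule extensionalityI[OF PI_ext[OF assms(1)] PI_ext[OF assms(2)]])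
  fix x assume "x \<in> S"
  then show "f x = g x"
    using wconv_unique[OF wit_lim[OF assms(3)] wit_lim[OF assms(4)]] PI_DP assms by blast
qed

lemma wconv_prod_H0_eventually:
  assumes "wconv (\<lambda>(n, p). D (a n) (a p)) H0 (sequentially \<times>\<^sub>F sequentially)" "\<And>n. a n \<in> S"
    "0 < t" "c < 1"
  shows "\<exists>N. \<forall>m\<ge>N. \<forall>n\<ge>N. c < D (a n) (a m) (ereal t)"
proof -
  have "\<And>i. (\<lambda>(n, p). D (a n) (a p)) i \<in> Delta_plus" using assms(2) Dp by auto
  from assms(1)[unfolded wconv_H0_iff[OF this]] assms(3,4)
  have "eventually (\<lambda>i. c < (\<lambda>(n, p). D (a n) (a p)) i (ereal t)) (sequentially \<times>\<^sub>F sequentially)"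
    by blast
  then show ?thesis unfolding eventually_prod_sequentially by simp
qed

lemma wit_H0:
  assumes w: "wit f a" and fD: "\<And>x. x \<in> S \<Longrightarrow> f x \<in> Delta_plus"
  shows "wconv (\<lambda>m. f (a m)) H0 sequentially"
  unfolding wconv_H0_iff[OF fD[OF wit_in[OF w]]]
proof (intro allI impI)
  fix t c :: real assume t: "0 < t" and c: "c < 1"
  define c' where "c' = (c + 1) / 2"
  have c': "c < c'" "c' < 1" using c by (auto simp: c'_def)
  obtain N where N: "\<And>m n. N \<le> m \<Longrightarrow> N \<le> n \<Longrightarrow> c' < D (a n) (a m) (ereal (t/2))"
  proof -
    have aS: "\<And>n. a n \<in> S" using wit_in[OF w] .
    have cau: "wconv (\<lambda>(n, p). D (a n) (a p)) H0 (sequentially \<times>\<^sub>F sequentially)"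
      using w by (simp add: wit_def pm_cauchy_def)
    show ?thesis using wconv_prod_H0_eventually[OF cau aS, where t="t/2" and c=c'] t c' that by auto
  qed
  show "eventually (\<lambda>m. c < f (a m) (ereal t)) sequentially"
    unfolding eventually_sequentially
  proof (intro exI allI impI)
    fix m assume m: "N \<le> m"
    have "c' \<le> f (a m) (ereal t)"
    proof (rule wconv_ge_pt[OF wit_lim[OF w wit_in[OF w]] fD[OF wit_in[OF w]]])
      show "\<And>n. D (a n) (a m) \<in> Delta_plus" using Dp wit_in[OF w] by blast
      show "t / 2 < t" using t by simp
      show "eventually (\<lambda>n. c' \<le> D (a n) (a m) (ereal (t / 2))) sequentially"
        unfolding eventually_sequentially using N m less_imp_le by blast
    qed
    then show "c < f (a m) (ereal t)" using c' by simp
  qed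
qed

lemma wconv_const_prod: "wconv (\<lambda>(n, p). F) F net"
  by (simp add: wconv_def split_def)

lemma delta_wit: "b \<in> S \<Longrightarrow> wit (delta_map S D b) (\<lambda>n. b)"
  unfolding wit_def pm_cauchy_def delta_map_def
  using Dself Dsym by (auto simp: wconv_const wconv_const_prod)

lemma delta_PI: "b \<in> S \<Longrightarrow> delta_map S D b \<in> PI"
  by (rule PiI[OF _ _ delta_wit]) (auto simp: delta_map_def Dp)

section \<open>The metric DD\<close>

abbreviation "DDS \<equiv> DD S T"

lemma S_ne: "S \<noteq> {}" by auto

lemma DD_ge:
  assumes "x \<in> S" "\<And>x. x \<in> S \<Longrightarrow> T (f x) (g x) \<in> Delta_plus"
  shows "T (f x) (g x) t \<le> DDS f g t"
proof -
  have "bdd_above ((\<lambda>F. F t) ` {T (f x) (g x) |x. x \<in> S})"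
    using assms(2) DP_le1 by (auto intro!: bdd_aboveI[of _ 1])
  then show ?thesis unfolding DD_def dsup_def
    using assms(1) by (intro cSup_upper) auto
qed

lemma DD_le:
  assumes "\<And>x. x \<in> S \<Longrightarrow> T (f x) (g x) t \<le> c"
  shows "DDS f g t \<le> c"
  unfolding DD_def dsup_def using assms S_ne by (intro cSup_least) auto

lemma DD_mono_real:
  assumes "\<And>x. x \<in> S \<Longrightarrow> T (f x) (g x) \<in> Delta_plus"
  shows "mono (\<lambda>s. DDS f g (ereal s))"
  unfolding mono_def
proof (intro allI impI)
  fix s s' :: real assume "s \<le> s'"
  show "DDS f g (ereal s) \<le> DDS f g (ereal s')"
  proof (rule DD_le)
    fix x assume x: "x \<in> S"
    have "T (f x) (g x) (ereal s) \<le> T (f x) (g x) (ereal s')"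
      using DP_monoD[OF assms[OF x]] \<open>s \<le> s'\<close> by simp
    also have "\<dots> \<le> DDS f g (ereal s')" by (rule DD_ge[OF x assms])
    finally show "T (f x) (g x) (ereal s) \<le> DDS f g (ereal s')" .
  qed
qed

lemma DD_master:
  assumes f: "f \<in> PI" and g: "g \<in> PI" and wf: "wit f a" and wg: "wit g b"
  shows "DDS f g \<in> Delta_plus \<and> wconv (\<lambda>n. D (a n) (b n)) (DDS f g) sequentially"
proof -
  have aS: "\<And>n. a n \<in> S" using wit_in[OF wf] .
  have bS: "\<And>n. b n \<in> S" using wit_in[OF wg] .
  have fD: "\<And>x. x \<in> S \<Longrightarrow> f x \<in> Delta_plus" using PI_DP[OF f] .
  have gD: "\<And>x. x \<in> S \<Longrightarrow> g x \<in> Delta_plus" using PI_DP[OF g] .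
  have TD: "\<And>x. x \<in> S \<Longrightarrow> T (f x) (g x) \<in> Delta_plus" using Tp fD gD by blast
  have phiD: "\<And>n. D (a n) (b n) \<in> Delta_plus" using Dp aS bS by blast
  have key: "DDS f g = K"
    if s: "strict_mono \<sigma>" and K: "K \<in> Delta_plus" and wK: "wconv (\<lambda>n. D (a (\<sigma> n)) (b (\<sigma> n))) K sequentially"
    for \<sigma> K
  proof -
    have up: "T (f x) (g x) \<le> K" if x: "x \<in> S" for x
    proof (rule wconv_le[OF _ wK TD[OF x] K])
      have e: "(\<lambda>n. D x (b (\<sigma> n))) = (\<lambda>n. D (b (\<sigma> n)) x)" using Dsym x bS by auto
      show "wconv (\<lambda>n. T (D (a (\<sigma> n)) x) (D x (b (\<sigma> n)))) (T (f x) (g x)) sequentially"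
        by (rule Tcont) (use x aS bS fD gD Dp e wconv_subseq[OF wit_lim[OF wf x] s]
            wconv_subseq[OF wit_lim[OF wg x] s] in auto)
      show "T (D (a (\<sigma> n)) x) (D x (b (\<sigma> n))) \<le> D (a (\<sigma> n)) (b (\<sigma> n))" for n
        using Dtri x aS bS by blast
    qed
    have gam: "T K (f (a m)) \<le> g (a m)" for m
    proof (rule wconv_le[OF _ wconv_subseq[OF wit_lim[OF wg aS] s] Tp[OF K fD[OF aS]] gD[OF aS]])
      have e: "(\<lambda>n. D (b (\<sigma> n)) (a (\<sigma> n))) = (\<lambda>n. D (a (\<sigma> n)) (b (\<sigma> n)))" using Dsym aS bS by auto
      show "wconv (\<lambda>n. T (D (b (\<sigma> n)) (a (\<sigma> n))) (D (a (\<sigma> n)) (a m))) (T K (f (a m))) sequentially"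
        by (rule Tcont) (use aS bS fD K Dp e wK wconv_subseq[OF wit_lim[OF wf aS] s] in auto)
      show "T (D (b (\<sigma> n)) (a (\<sigma> n))) (D (a (\<sigma> n)) (a m)) \<le> D (b (\<sigma> n)) (a m)" for n
        using Dtri aS bS by blast
    qed
    define H where "H m = T (f (a m)) (T K (f (a m)))" for m
    have HD: "H m \<in> Delta_plus" for m unfolding H_def using Tp fD aS K by blast
    have Hlim: "wconv H K sequentially"
    proof -
      have "wconv (\<lambda>m. T K (f (a m))) (T K H0) sequentially"
        by (rule Tcont) (use K fD aS H0_DP wit_H0[OF wf fD] wconv_const in auto)
      then have w1: "wconv (\<lambda>m. T K (f (a m))) K sequentially" using TH0r[OF K] by simp
      have "wconv H (T H0 K) sequentially" unfolding H_def
        by (rule Tcont) (use K fD aS H0_DP Tp wit_H0[OF wf fD] w1 in auto)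
      then show ?thesis using TH0l[OF K] by simp
    qed
    have HDD: "H m (ereal t) \<le> DDS f g (ereal t)" for m t
    proof -
      have "H m \<le> T (f (a m)) (g (a m))" unfolding H_def
        by (rule Tmono) (use fD gD aS K Tp gam in auto)
      then have "H m (ereal t) \<le> T (f (a m)) (g (a m)) (ereal t)" by (simp add: le_fun_def)
      also have "\<dots> \<le> DDS f g (ereal t)" by (rule DD_ge[OF aS TD])
      finally show ?thesis .
    qed
    have low: "K (ereal t) \<le> DDS f g (ereal t)" for t
      by (rule wconv_le_mono[OF Hlim K DD_mono_real[OF TD] HDD])
    show ?thesis
    proof (rule ext)
      fix x :: ereal
      have le1: "DDS f g x \<le> K x" by (rule DD_le) (use up in \<open>auto simp: le_fun_def\<close>)
      have "K x \<le> DDS f g x"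
      proof (cases x)
        case (real r) then show ?thesis using low by simp
      next
        case PInf
        have "K x = T (f \<one>) (g \<one>) x" using PInf DP_pinf[OF K] DP_pinf[OF TD[OF one_closed]] by simp
        also have "\<dots> \<le> DDS f g x" by (rule DD_ge[OF _ TD]) simp
        finally show ?thesis .
      next
        case MInf
        have "K x = T (f \<one>) (g \<one>) x" using MInf DP_minf[OF K] DP_minf[OF TD[OF one_closed]] by simp
        also have "\<dots> \<le> DDS f g x" by (rule DD_ge[OF _ TD]) simp
        finally show ?thesis .
      qed
      then show "DDS f g x = K x" using le1 by simp
    qed
  qed
  obtain \<sigma>0 K0 where s0: "strict_mono \<sigma>0" "K0 \<in> Delta_plus" "wconv (\<lambda>n. D (a (\<sigma>0 n)) (b (\<sigma>0 n))) K0 sequentially"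
    using helly_DP[of "\<lambda>n. D (a n) (b n)", OF phiD] by blast
  have DDp: "DDS f g \<in> Delta_plus" using key[OF s0] s0(2) by simp
  have "wconv (\<lambda>n. D (a n) (b n)) (DDS f g) sequentially"
    by (rule wconv_subsub[OF phiD DDp]) (use key in auto)
  then show ?thesis using DDp by simp
qed


end


context pmg
begin

abbreviation "OD \<equiv> odot G T"

lemma OD_in: "x \<in> S \<Longrightarrow> OD f g x = dsup {T (f y) (g z) | y z. y \<in> S \<and> z \<in> S \<and> y \<otimes> z = x}"
  by (simp add: odot_def)

lemma OD_ext: "OD f g \<in> extensional S"
  by (simp add: odot_def)

lemma OD_ge:
  assumes "x \<in> S" "y \<in> S" "z \<in> S" "y \<otimes> z = x"
    "\<And>x. x \<in> S \<Longrightarrow> f x \<in> Delta_plus" "\<And>x. x \<in> S \<Longrightarrow> g x \<in> Delta_plus"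
  shows "T (f y) (g z) t \<le> OD f g x t"
proof -
  have "bdd_above ((\<lambda>F. F t) ` {T (f y) (g z) | y z. y \<in> S \<and> z \<in> S \<and> y \<otimes> z = x})"
    using assms(5,6) DP_le1 Tp by (auto intro!: bdd_aboveI[of _ 1])
  then show ?thesis unfolding OD_in[OF assms(1)] dsup_def
    using assms(1-4) by (intro cSup_upper) auto
qed

lemma OD_le:
  assumes "x \<in> S" "\<And>y z. y \<in> S \<Longrightarrow> z \<in> S \<Longrightarrow> y \<otimes> z = x \<Longrightarrow> T (f y) (g z) t \<le> c"
  shows "OD f g x t \<le> c"
proof -
  have "T (f x) (g \<one>) \<in> {T (f y) (g z) | y z. y \<in> S \<and> z \<in> S \<and> y \<otimes> z = x}"
    using assms(1) by force
  then show ?thesis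
    unfolding OD_in[OF assms(1)] dsup_def using assms by (intro cSup_least) auto
qed

lemma OD_mono_real:
  assumes x: "x \<in> S" and fD: "\<And>x. x \<in> S \<Longrightarrow> f x \<in> Delta_plus" and gD: "\<And>x. x \<in> S \<Longrightarrow> g x \<in> Delta_plus"
  shows "mono (\<lambda>s. OD f g x (ereal s))"
  unfolding mono_def
proof (intro allI impI)
  fix s s' :: real assume "s \<le> s'"
  show "OD f g x (ereal s) \<le> OD f g x (ereal s')"
  proof (rule OD_le[OF x])
    fix y z assume yz: "y \<in> S" "z \<in> S" "y \<otimes> z = x"
    have "T (f y) (g z) (ereal s) \<le> T (f y) (g z) (ereal s')"
      using DP_monoD[OF Tp[OF fD gD]] yz \<open>s \<le> s'\<close> by simp
    also have "\<dots> \<le> OD f g x (ereal s')" by (rule OD_ge[OF x yz fD gD])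
    finally show "T (f y) (g z) (ereal s) \<le> OD f g x (ereal s')" .
  qed
qed

lemma OD_master:
  assumes f: "f \<in> PI" and g: "g \<in> PI" and wf: "wit f a" and wg: "wit g b" and x: "x \<in> S"
  shows "OD f g x \<in> Delta_plus \<and> wconv (\<lambda>n. D (a n \<otimes> b n) x) (OD f g x) sequentially"
proof -
  have aS: "\<And>n. a n \<in> S" using wit_in[OF wf] .
  have bS: "\<And>n. b n \<in> S" using wit_in[OF wg] .
  have fD: "\<And>x. x \<in> S \<Longrightarrow> f x \<in> Delta_plus" using PI_DP[OF f] .
  have gD: "\<And>x. x \<in> S \<Longrightarrow> g x \<in> Delta_plus" using PI_DP[OF g] .
  have phiD: "\<And>n. D (a n \<otimes> b n) x \<in> Delta_plus" using Dp aS bS x by blast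
  have key: "OD f g x = K"
    if s: "strict_mono \<sigma>" and K: "K \<in> Delta_plus" and wK: "wconv (\<lambda>n. D (a (\<sigma> n) \<otimes> b (\<sigma> n)) x) K sequentially"
    for \<sigma> K
  proof -
    have up: "T (f y) (g z) \<le> K" if yz: "y \<in> S" "z \<in> S" "y \<otimes> z = x" for y z
    proof (rule wconv_le[OF _ wK Tp[OF fD[OF yz(1)] gD[OF yz(2)]] K])
      show "wconv (\<lambda>n. T (D (a (\<sigma> n)) y) (D (b (\<sigma> n)) z)) (T (f y) (g z)) sequentially"
        by (rule Tcont) (use yz aS bS fD gD Dp wconv_subseq[OF wit_lim[OF wf yz(1)] s]
            wconv_subseq[OF wit_lim[OF wg yz(2)] s] in auto)
      show "T (D (a (\<sigma> n)) y) (D (b (\<sigma> n)) z) \<le> D (a (\<sigma> n) \<otimes> b (\<sigma> n)) x" for n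
        using Dmul[of "a (\<sigma> n)" "b (\<sigma> n)" y z] yz aS bS by simp
    qed
    have gam: "T (f (a m)) K \<le> g (inv (a m) \<otimes> x)" for m
    proof (rule wconv_le[OF _ wconv_subseq[OF wit_lim[OF wg] s] Tp[OF fD[OF aS] K] gD])
      show ix: "inv a m \<otimes> x \<in> S" using aS x by simp
      have e: "(\<lambda>n. D (a m) (a (\<sigma> n))) = (\<lambda>n. D (a (\<sigma> n)) (a m))" using Dsym aS by auto
      show "wconv (\<lambda>n. T (D (a m) (a (\<sigma> n))) (D (a (\<sigma> n) \<otimes> b (\<sigma> n)) x)) (T (f (a m)) K) sequentially"
        by (rule Tcont) (use aS bS x fD K Dp e wK wconv_subseq[OF wit_lim[OF wf aS] s] in auto)
      show "T (D (a m) (a (\<sigma> n))) (D (a (\<sigma> n) \<otimes> b (\<sigma> n)) x) \<le> D (b (\<sigma> n)) (inv a m \<otimes> x)" for n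
      proof -
        have e1: "D (a m) (a (\<sigma> n)) = D (a m \<otimes> b (\<sigma> n)) (a (\<sigma> n) \<otimes> b (\<sigma> n))"
          using Dr aS bS by simp
        have e2: "D (b (\<sigma> n)) (inv a m \<otimes> x) = D (a m \<otimes> b (\<sigma> n)) x"
          using Dl[of "b (\<sigma> n)" "inv a m \<otimes> x" "a m"] aS bS x by (simp add: m_assoc[symmetric])
        show ?thesis unfolding e1 e2 by (rule Dtri) (use aS bS x in auto)
      qed
    qed (use aS x in simp)
    define H where "H m = T (f (a m)) (T (f (a m)) K)" for m
    have Hlim: "wconv H K sequentially"
    proof -
      have "wconv (\<lambda>m. T (f (a m)) K) (T H0 K) sequentially"
        by (rule Tcont) (use K fD aS H0_DP wit_H0[OF wf fD] wconv_const in auto)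
      then have w1: "wconv (\<lambda>m. T (f (a m)) K) K sequentially" using TH0l[OF K] by simp
      have "wconv H (T H0 K) sequentially" unfolding H_def
        by (rule Tcont) (use K fD aS H0_DP Tp wit_H0[OF wf fD] w1 in auto)
      then show ?thesis using TH0l[OF K] by simp
    qed
    have HOD: "H m (ereal t) \<le> OD f g x (ereal t)" for m t
    proof -
      have ix: "inv a m \<otimes> x \<in> S" using aS x by simp
      have "H m \<le> T (f (a m)) (g (inv (a m) \<otimes> x))" unfolding H_def
        by (rule Tmono) (use fD gD aS K Tp gam ix in auto)
      then have "H m (ereal t) \<le> T (f (a m)) (g (inv (a m) \<otimes> x)) (ereal t)" by (simp add: le_fun_def)
      also have "\<dots> \<le> OD f g x (ereal t)"
        by (rule OD_ge[OF x aS ix _ fD gD]) (use aS x in \<open>simp add: m_assoc[symmetric]\<close>)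
      finally show ?thesis .
    qed
    have low: "K (ereal t) \<le> OD f g x (ereal t)" for t
      by (rule wconv_le_mono[OF Hlim K OD_mono_real[OF x fD gD] HOD])
    show ?thesis
    proof (rule ext)
      fix y :: ereal
      have le1: "OD f g x y \<le> K y" by (rule OD_le[OF x]) (use up in \<open>auto simp: le_fun_def\<close>)
      have TD: "T (f x) (g \<one>) \<in> Delta_plus" using Tp fD gD x by simp
      have mem: "T (f x) (g \<one>) y \<le> OD f g x y" by (rule OD_ge[OF x x _ _ fD gD]) (use x in auto)
      have "K y \<le> OD f g x y"
      proof (cases y)
        case (real r) then show ?thesis using low by simp
      next
        case PInf
        then show ?thesis using mem DP_pinf[OF K] DP_pinf[OF TD] by simp
      next
        case MInf
        then show ?thesis using mem DP_minf[OF K] DP_minf[OF TD] by simp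
      qed
      then show "OD f g x y = K y" using le1 by simp
    qed
  qed
  obtain \<sigma>0 K0 where s0: "strict_mono \<sigma>0" "K0 \<in> Delta_plus" "wconv (\<lambda>n. D (a (\<sigma>0 n) \<otimes> b (\<sigma>0 n)) x) K0 sequentially"
    using helly_DP[of "\<lambda>n. D (a n \<otimes> b n) x", OF phiD] by blast
  have ODp: "OD f g x \<in> Delta_plus" using key[OF s0] s0(2) by simp
  have "wconv (\<lambda>n. D (a n \<otimes> b n) x) (OD f g x) sequentially"
    by (rule wconv_subsub[OF phiD ODp]) (use key in auto)
  then show ?thesis using ODp by simp
qed

lemma cauchy_mult:
  assumes a: "pm_cauchy S D a" and b: "pm_cauchy S D b"
  shows "pm_cauchy S D (\<lambda>n. a n \<otimes> b n)"
proof -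
  have aS: "\<And>n. a n \<in> S" and bS: "\<And>n. b n \<in> S" using a b by (auto simp: pm_cauchy_def)
  define Fa where "Fa = (\<lambda>(n, p). D (a n) (a p))"
  define Fb where "Fb = (\<lambda>(n, p). D (b n) (b p))"
  define Fc where "Fc = (\<lambda>(n, p). D (a n \<otimes> b n) (a p \<otimes> b p))"
  have FaD: "Fa i \<in> Delta_plus" for i unfolding Fa_def using Dp aS by (cases i) auto
  have FbD: "Fb i \<in> Delta_plus" for i unfolding Fb_def using Dp bS by (cases i) auto
  have FcD: "Fc i \<in> Delta_plus" for i unfolding Fc_def using Dp aS bS by (cases i) auto
  have "wconv (\<lambda>i. T (Fa i) (Fb i)) H0 (sequentially \<times>\<^sub>F sequentially)"
    by (rule T_H0_lim[OF FaD FbD]) (use a b in \<open>auto simp: pm_cauchy_def Fa_def Fb_def\<close>)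
  moreover have "T (Fa i) (Fb i) \<le> Fc i" for i
    unfolding Fa_def Fb_def Fc_def using Dmul aS bS by (cases i) auto
  ultimately have "wconv Fc H0 (sequentially \<times>\<^sub>F sequentially)"
    by (intro wconv_H0_squeeze[OF FcD, of "\<lambda>i. T (Fa i) (Fb i)"]) (auto intro: Tp FaD FbD)
  then show ?thesis using aS bS by (simp add: pm_cauchy_def Fc_def)
qed

lemma OD_PI:
  assumes f: "f \<in> PI" and g: "g \<in> PI" and wf: "wit f a" and wg: "wit g b"
  shows "OD f g \<in> PI \<and> wit (OD f g) (\<lambda>n. a n \<otimes> b n)"
proof -
  have w: "wit (OD f g) (\<lambda>n. a n \<otimes> b n)"
    unfolding wit_def using cauchy_mult[OF wit_cauchy[OF wf] wit_cauchy[OF wg]] OD_master[OF f g wf wg] by blast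
  have "OD f g \<in> PI"
    by (rule PiI[OF OD_ext _ w]) (use OD_master[OF f g wf wg] in blast)
  then show ?thesis using w by simp
qed

lemma OD_closed: "f \<in> PI \<Longrightarrow> g \<in> PI \<Longrightarrow> OD f g \<in> PI"
proof -
  assume f: "f \<in> PI" and g: "g \<in> PI"
  obtain a where a: "wit f a" using PI_wit[OF f] by blast
  obtain b where b: "wit g b" using PI_wit[OF g] by blast
  show ?thesis using OD_PI[OF f g a b] by (rule conjunct1)
qed

lemma D_inv: "p \<in> S \<Longrightarrow> x \<in> S \<Longrightarrow> D (inv p) x = D p (inv x)"
proof -
  assume px: "p \<in> S" "x \<in> S"
  have 1: "D (p \<otimes> inv p) (p \<otimes> x) = D (inv p) x" by (rule Dl) (use px in auto)
  have 2: "D (\<one> \<otimes> inv x) ((p \<otimes> x) \<otimes> inv x) = D \<one> (p \<otimes> x)" by (rule Dr) (use px in auto)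
  have e1: "p \<otimes> inv p = \<one>" using px by simp
  have e2: "\<one> \<otimes> inv x = inv x" using px by simp
  have e3: "(p \<otimes> x) \<otimes> inv x = p" using px by (simp add: m_assoc)
  have "D (inv p) x = D (inv x) p" using 1 2 e1 e2 e3 by simp
  also have "\<dots> = D p (inv x)" using Dsym px by simp
  finally show ?thesis .
qed

definition finv :: "('a \<Rightarrow> dfun) \<Rightarrow> ('a \<Rightarrow> dfun)" where
  "finv f = restrict (\<lambda>x. f (inv x)) S"

lemma finv_PI:
  assumes f: "f \<in> PI" and wf: "wit f a"
  shows "finv f \<in> PI \<and> wit (finv f) (\<lambda>n. inv (a n))"
proof -
  have aS: "\<And>n. a n \<in> S" using wit_in[OF wf] .
  have c: "pm_cauchy S D (\<lambda>n. inv (a n))"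
  proof -
    have e: "(\<lambda>(n, p). D (inv (a n)) (inv (a p))) = (\<lambda>(n, p). D (a n) (a p))"
      using D_inv aS by (auto simp: fun_eq_iff)
    show ?thesis using wit_cauchy[OF wf] aS unfolding pm_cauchy_def e by simp
  qed
  have w: "wit (finv f) (\<lambda>n. inv (a n))"
    unfolding wit_def
  proof (intro conjI c ballI)
    fix x assume x: "x \<in> S"
    have e: "(\<lambda>n. D (inv (a n)) x) = (\<lambda>n. D (a n) (inv x))" using D_inv aS x by auto
    show "wconv (\<lambda>n. D (inv (a n)) x) (finv f x) sequentially"
      unfolding e using wit_lim[OF wf, of "inv x"] x by (simp add: finv_def)
  qed
  have "finv f \<in> PI"
    by (rule PiI[OF _ _ w]) (auto simp: finv_def PI_DP[OF f])
  then show ?thesis using w by simp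
qed

lemma PI_group: "group (Pi_group G D T)"
proof (rule groupI)
  fix x y assume "x \<in> carrier (Pi_group G D T)" "y \<in> carrier (Pi_group G D T)"
  then show "x \<otimes>\<^bsub>Pi_group G D T\<^esub> y \<in> carrier (Pi_group G D T)"
    by (simp add: Pi_group_def OD_closed)
next
  show "\<one>\<^bsub>Pi_group G D T\<^esub> \<in> carrier (Pi_group G D T)"
    by (simp add: Pi_group_def delta_PI)
next
  fix x y z assume xyz: "x \<in> carrier (Pi_group G D T)" "y \<in> carrier (Pi_group G D T)" "z \<in> carrier (Pi_group G D T)"
  then have P: "x \<in> PI" "y \<in> PI" "z \<in> PI" by (auto simp: Pi_group_def)
  obtain a b c where w: "wit x a" "wit y b" "wit z c" using PI_wit3[OF P(1) P(2) P(3)] by blast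
  have xy: "OD x y \<in> PI \<and> wit (OD x y) (\<lambda>n. a n \<otimes> b n)" using OD_PI[OF P(1,2) w(1,2)] .
  have yz: "OD y z \<in> PI \<and> wit (OD y z) (\<lambda>n. b n \<otimes> c n)" using OD_PI[OF P(2,3) w(2,3)] .
  have 1: "OD (OD x y) z \<in> PI \<and> wit (OD (OD x y) z) (\<lambda>n. (a n \<otimes> b n) \<otimes> c n)"
    using OD_PI[OF conjunct1[OF xy] P(3) conjunct2[OF xy] w(3)] by simp
  have 2: "OD x (OD y z) \<in> PI \<and> wit (OD x (OD y z)) (\<lambda>n. a n \<otimes> (b n \<otimes> c n))"
    using OD_PI[OF P(1) conjunct1[OF yz] w(1) conjunct2[OF yz]] by simp
  have e: "(\<lambda>n. (a n \<otimes> b n) \<otimes> c n) = (\<lambda>n. a n \<otimes> (b n \<otimes> c n))"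
    using wit_in[OF w(1)] wit_in[OF w(2)] wit_in[OF w(3)] by (simp add: m_assoc)
  have "OD (OD x y) z = OD x (OD y z)"
    using PI_eq[OF conjunct1[OF 1] conjunct1[OF 2] conjunct2[OF 1]] conjunct2[OF 2] e by simp
  then show "x \<otimes>\<^bsub>Pi_group G D T\<^esub> y \<otimes>\<^bsub>Pi_group G D T\<^esub> z = x \<otimes>\<^bsub>Pi_group G D T\<^esub> (y \<otimes>\<^bsub>Pi_group G D T\<^esub> z)"
    by (simp add: Pi_group_def)
next
  fix x assume "x \<in> carrier (Pi_group G D T)"
  then have P: "x \<in> PI" by (simp add: Pi_group_def)
  obtain a where w: "wit x a" using PI_wit[OF P] by blast
  have 1: "OD (delta_map S D \<one>) x \<in> PI \<and> wit (OD (delta_map S D \<one>) x) (\<lambda>n. \<one> \<otimes> a n)"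
    using OD_PI[OF delta_PI P delta_wit w] by simp
  have e: "(\<lambda>n. \<one> \<otimes> a n) = a" using wit_in[OF w] by auto
  have "OD (delta_map S D \<one>) x = x"
    using PI_eq[OF conjunct1[OF 1] P] conjunct2[OF 1] e w by simp
  then show "\<one>\<^bsub>Pi_group G D T\<^esub> \<otimes>\<^bsub>Pi_group G D T\<^esub> x = x"
    by (simp add: Pi_group_def)
next
  fix x assume "x \<in> carrier (Pi_group G D T)"
  then have P: "x \<in> PI" by (simp add: Pi_group_def)
  obtain a where w: "wit x a" using PI_wit[OF P] by blast
  have fi: "finv x \<in> PI \<and> wit (finv x) (\<lambda>n. inv (a n))" using finv_PI[OF P w] .
  have 1: "OD (finv x) x \<in> PI \<and> wit (OD (finv x) x) (\<lambda>n. inv (a n) \<otimes> a n)"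
    using OD_PI[OF _ P _ w] fi by blast
  have e: "(\<lambda>n. inv (a n) \<otimes> a n) = (\<lambda>n. \<one>)" using wit_in[OF w] by auto
  have "OD (finv x) x = delta_map S D \<one>"
    using PI_eq[OF conjunct1[OF 1] delta_PI[OF one_closed]] conjunct2[OF 1] e delta_wit[OF one_closed] by simp
  then show "\<exists>y\<in>carrier (Pi_group G D T). y \<otimes>\<^bsub>Pi_group G D T\<^esub> x = \<one>\<^bsub>Pi_group G D T\<^esub>"
    using fi by (auto simp: Pi_group_def)
qed


end


lemma conv_inverse_H0:
  fixes Hs :: "nat \<Rightarrow> dfun"
  assumes H: "\<And>n. Hs n \<in> Delta_plus" "\<And>n. 1 - inverse (real (Suc n)) < Hs n (ereal (inverse (real (Suc n))))"
  shows "wconv Hs H0 sequentially"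
  unfolding wconv_H0_iff[OF H(1)]
proof (intro allI impI)
  fix t' c' :: real assume "0 < t'" "c' < 1"
  then have "0 < min t' (1 - c')" by simp
  then obtain N where N: "inverse (real (Suc N)) < min t' (1 - c')"
    using reals_Archimedean by blast
  show "eventually (\<lambda>n. c' < Hs n (ereal t')) sequentially"
    unfolding eventually_sequentially
  proof (intro exI allI impI)
    fix n assume "N \<le> n"
    then have le: "inverse (real (Suc n)) \<le> inverse (real (Suc N))"
      by (simp add: le_imp_inverse_le)
    have N1: "inverse (real (Suc N)) < t'" and N2: "inverse (real (Suc N)) < 1 - c'"
      using N by auto
    have "c' < 1 - inverse (real (Suc n))" using N2 le by linarith
    also have "\<dots> < Hs n (ereal (inverse (real (Suc n))))" using H(2) .
    also have "\<dots> \<le> Hs n (ereal t')"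
      using DP_monoD[OF H(1)[of n], of "ereal (inverse (real (Suc n)))" "ereal t'"] N1 le
      by (simp del: of_nat_Suc)
    finally show "c' < Hs n (ereal t')" .
  qed
qed

context pmg
begin

lemma DD_DP: "f \<in> PI \<Longrightarrow> g \<in> PI \<Longrightarrow> DDS f g \<in> Delta_plus"
proof -
  assume P: "f \<in> PI" "g \<in> PI"
  obtain a b where w: "wit f a" "wit g b" using PI_wit2[OF P(1) P(2)] by blast
  show ?thesis using DD_master[OF P w] by (rule conjunct1)
qed

lemma DD_lim: "f \<in> PI \<Longrightarrow> g \<in> PI \<Longrightarrow> wit f a \<Longrightarrow> wit g b \<Longrightarrow> wconv (\<lambda>n. D (a n) (b n)) (DDS f g) sequentially"
  using DD_master by blast

lemma DD_sym: "f \<in> PI \<Longrightarrow> g \<in> PI \<Longrightarrow> DDS f g = DDS g f"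
proof -
  assume P: "f \<in> PI" "g \<in> PI"
  obtain a b where w: "wit f a" "wit g b" using PI_wit2[OF P(1) P(2)] by blast
  have e: "(\<lambda>n. D (b n) (a n)) = (\<lambda>n. D (a n) (b n))" using Dsym wit_in w by auto
  show ?thesis using wconv_unique[OF DD_lim[OF P w] _ DD_DP[OF P] DD_DP[OF P(2,1)]]
      DD_lim[OF P(2,1) w(2,1)] e by simp
qed

lemma DD_self: "f \<in> PI \<Longrightarrow> DDS f f = H0"
proof -
  assume P: "f \<in> PI"
  obtain a where w: "wit f a" using PI_wit[OF P] by blast
  have e: "(\<lambda>n. D (a n) (a n)) = (\<lambda>n. H0)" using Dself wit_in w by auto
  have "wconv (\<lambda>n. D (a n) (a n)) (DDS f f) sequentially" using DD_lim[OF P P w w] .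
  then have "wconv (\<lambda>n. H0) (DDS f f) sequentially" using e by simp
  then show ?thesis using wconv_unique[OF _ wconv_const DD_DP[OF P P] H0_DP] by blast
qed

lemma DD_tri: "f \<in> PI \<Longrightarrow> g \<in> PI \<Longrightarrow> h \<in> PI \<Longrightarrow> T (DDS f g) (DDS g h) \<le> DDS f h"
proof -
  assume P: "f \<in> PI" "g \<in> PI" "h \<in> PI"
  obtain a b c where w: "wit f a" "wit g b" "wit h c" using PI_wit3[OF P(1) P(2) P(3)] by blast
  show ?thesis
  proof (rule wconv_le[OF _ DD_lim[OF P(1,3) w(1,3)] Tp[OF DD_DP[OF P(1,2)] DD_DP[OF P(2,3)]] DD_DP[OF P(1,3)]])
    show "wconv (\<lambda>n. T (D (a n) (b n)) (D (b n) (c n))) (T (DDS f g) (DDS g h)) sequentially"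
      by (rule Tcont) (use DD_lim[OF P(1,2) w(1,2)] DD_lim[OF P(2,3) w(2,3)] DD_DP P Dp wit_in w in auto)
    show "T (D (a n) (b n)) (D (b n) (c n)) \<le> D (a n) (c n)" for n
      using Dtri wit_in w by blast
  qed
qed

lemma DD_eq_H0: "f \<in> PI \<Longrightarrow> g \<in> PI \<Longrightarrow> DDS f g = H0 \<Longrightarrow> f = g"
proof -
  have half: "g x \<le> f x" if P: "f \<in> PI" "g \<in> PI" and H: "DDS f g = H0" and x: "x \<in> S" for f g x
  proof -
    obtain a b where w: "wit f a" "wit g b" using PI_wit2[OF P(1) P(2)] by blast
    show ?thesis
    proof (rule wconv_le[OF _ wit_lim[OF w(1) x] _ PI_DP[OF P(1) x]])
      show "wconv (\<lambda>n. T (D (a n) (b n)) (D (b n) x)) (g x) sequentially"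
        using Tcont[of "\<lambda>n. D (a n) (b n)" "\<lambda>n. D (b n) x" H0 "g x"] DD_lim[OF P w] H
          TH0l[OF PI_DP[OF P(2) x]] Dp wit_in w x H0_DP PI_DP[OF P(2) x] wit_lim[OF w(2) x] by auto
      show "g x \<in> Delta_plus" using PI_DP[OF P(2) x] .
      show "T (D (a n) (b n)) (D (b n) x) \<le> D (a n) x" for n using Dtri wit_in w x by blast
    qed
  qed
  assume P: "f \<in> PI" "g \<in> PI" and H: "DDS f g = H0"
  have H': "DDS g f = H0" using H DD_sym P by simp
  show "f = g"
  proof (rule extensionalityI[OF PI_ext[OF P(1)] PI_ext[OF P(2)]])
    fix x assume "x \<in> S"
    then show "f x = g x" using half[OF P H] half[OF P(2,1) H'] by (blast intro: antisym)
  qed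
qed

lemma DD_inv_r: "f \<in> PI \<Longrightarrow> g \<in> PI \<Longrightarrow> h \<in> PI \<Longrightarrow> DDS (OD f h) (OD g h) = DDS f g"
proof -
  assume P: "f \<in> PI" "g \<in> PI" "h \<in> PI"
  obtain a b c where w: "wit f a" "wit g b" "wit h c" using PI_wit3[OF P(1) P(2) P(3)] by blast
  have 1: "OD f h \<in> PI \<and> wit (OD f h) (\<lambda>n. a n \<otimes> c n)" using OD_PI[OF P(1,3) w(1,3)] .
  have 2: "OD g h \<in> PI \<and> wit (OD g h) (\<lambda>n. b n \<otimes> c n)" using OD_PI[OF P(2,3) w(2,3)] .
  have e: "(\<lambda>n. D (a n \<otimes> c n) (b n \<otimes> c n)) = (\<lambda>n. D (a n) (b n))" using Dr wit_in w by auto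
  have "wconv (\<lambda>n. D (a n) (b n)) (DDS (OD f h) (OD g h)) sequentially"
    using DD_lim[OF conjunct1[OF 1] conjunct1[OF 2] conjunct2[OF 1] conjunct2[OF 2]] e by simp
  then show ?thesis
    using wconv_unique[OF _ DD_lim[OF P(1,2) w(1,2)] DD_DP[OF conjunct1[OF 1] conjunct1[OF 2]] DD_DP[OF P(1,2)]] by blast
qed

lemma DD_inv_l: "f \<in> PI \<Longrightarrow> g \<in> PI \<Longrightarrow> h \<in> PI \<Longrightarrow> DDS (OD h f) (OD h g) = DDS f g"
proof -
  assume P: "f \<in> PI" "g \<in> PI" "h \<in> PI"
  obtain a b c where w: "wit f a" "wit g b" "wit h c" using PI_wit3[OF P(1) P(2) P(3)] by blast
  have 1: "OD h f \<in> PI \<and> wit (OD h f) (\<lambda>n. c n \<otimes> a n)" using OD_PI[OF P(3,1) w(3,1)] .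
  have 2: "OD h g \<in> PI \<and> wit (OD h g) (\<lambda>n. c n \<otimes> b n)" using OD_PI[OF P(3,2) w(3,2)] .
  have e: "(\<lambda>n. D (c n \<otimes> a n) (c n \<otimes> b n)) = (\<lambda>n. D (a n) (b n))" using Dl wit_in w by auto
  have "wconv (\<lambda>n. D (a n) (b n)) (DDS (OD h f) (OD h g)) sequentially"
    using DD_lim[OF conjunct1[OF 1] conjunct1[OF 2] conjunct2[OF 1] conjunct2[OF 2]] e by simp
  then show ?thesis
    using wconv_unique[OF _ DD_lim[OF P(1,2) w(1,2)] DD_DP[OF conjunct1[OF 1] conjunct1[OF 2]] DD_DP[OF P(1,2)]] by blast
qed

lemma PI_pm_space: "pm_space PI DDS T"
  unfolding pm_space_def
  using tf DD_DP DD_self DD_eq_H0 DD_sym DD_tri by blast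

lemma PI_inv_pm_group: "inv_pm_group (Pi_group G D T) DDS T"
  unfolding inv_pm_group_def
  using PI_group PI_pm_space DD_inv_r DD_inv_l by (simp add: Pi_group_def)

lemma DD_delta: "f \<in> PI \<Longrightarrow> b \<in> S \<Longrightarrow> DDS f (delta_map S D b) = f b"
proof -
  assume f: "f \<in> PI" and b: "b \<in> S"
  obtain a where w: "wit f a" using PI_wit[OF f] by blast
  show ?thesis using wconv_unique[OF DD_lim[OF f delta_PI[OF b] w delta_wit[OF b]] wit_lim[OF w b]]
      DD_DP[OF f delta_PI[OF b]] PI_DP[OF f b] by simp
qed

lemma delta_delta: "a \<in> S \<Longrightarrow> b \<in> S \<Longrightarrow> DDS (delta_map S D a) (delta_map S D b) = D a b"
  using wconv_unique[OF DD_lim[OF delta_PI delta_PI delta_wit delta_wit] wconv_const] DD_DP delta_PI Dp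
  by metis

lemma cauchy_lim_exists:
  assumes c: "pm_cauchy S D c" and x: "x \<in> S"
  shows "\<exists>K\<in>Delta_plus. wconv (\<lambda>n. D (c n) x) K sequentially"
proof (rule wconv_exists)
  have cS: "\<And>n. c n \<in> S" using c by (simp add: pm_cauchy_def)
  show "\<And>n. D (c n) x \<in> Delta_plus" using Dp cS x by blast
  fix \<sigma>1 \<sigma>2 K1 K2
  assume s: "strict_mono \<sigma>1" "strict_mono \<sigma>2" and K: "K1 \<in> Delta_plus" "K2 \<in> Delta_plus"
    and w: "wconv (\<lambda>n. D (c (\<sigma>1 n)) x) K1 sequentially" "wconv (\<lambda>n. D (c (\<sigma>2 n)) x) K2 sequentially"
  have fl: "filterlim (\<lambda>i. (\<sigma>2 i, \<sigma>1 i)) (sequentially \<times>\<^sub>F sequentially) sequentially"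
    by (intro filterlim_Pair filterlim_subseq s)
  have "wconv (\<lambda>i. (\<lambda>(n, p). D (c n) (c p)) (\<sigma>2 i, \<sigma>1 i)) H0 sequentially"
    by (rule wconv_compose[OF _ fl]) (use c in \<open>simp add: pm_cauchy_def\<close>)
  then have h: "wconv (\<lambda>i. D (c (\<sigma>2 i)) (c (\<sigma>1 i))) H0 sequentially" by simp
  show "K1 \<le> K2"
  proof (rule wconv_le[OF _ w(2) K])
    show "wconv (\<lambda>n. T (D (c (\<sigma>2 n)) (c (\<sigma>1 n))) (D (c (\<sigma>1 n)) x)) K1 sequentially"
      using Tcont[OF _ _ H0_DP K(1) h w(1)] TH0l[OF K(1)] Dp cS x by auto
    show "T (D (c (\<sigma>2 n)) (c (\<sigma>1 n))) (D (c (\<sigma>1 n)) x) \<le> D (c (\<sigma>2 n)) x" for n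
      using Dtri cS x by blast
  qed
qed

lemma PI_complete: "pm_complete PI DDS"
  unfolding pm_complete_def
proof (intro allI impI)
  fix z assume zc: "pm_cauchy PI DDS z"
  have zP: "\<And>k. z k \<in> PI" using zc by (simp add: pm_cauchy_def)
  have "\<forall>k. \<exists>a. wit (z k) a" using PI_wit zP by blast
  from choice[OF this] obtain w where w': "\<forall>k. wit (z k) (w k)" by blast
  then have w: "\<And>k. wit (z k) (w k)" by blast
  have "\<exists>m. 1 - inverse (real (Suc k)) < z k (w k m) (ereal (inverse (real (Suc k))))" for k
  proof -
    have "wconv (\<lambda>m. z k (w k m)) H0 sequentially" using wit_H0[OF w PI_DP[OF zP]] .
    then have "eventually (\<lambda>m. 1 - inverse (real (Suc k)) < z k (w k m) (ereal (inverse (real (Suc k))))) sequentially"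
      using wconv_H0_iff[of "\<lambda>m. z k (w k m)"] PI_DP[OF zP] wit_in[OF w] by simp
    then show ?thesis by (auto simp: eventually_sequentially)
  qed
  then obtain mm where mm: "\<And>k. 1 - inverse (real (Suc k)) < z k (w k (mm k)) (ereal (inverse (real (Suc k))))"
    by metis
  define b where "b k = w k (mm k)" for k
  have bS: "\<And>k. b k \<in> S" unfolding b_def using wit_in[OF w] .
  define \<phi> where "\<phi> k = z k (b k)" for k
  have phiD: "\<And>k. \<phi> k \<in> Delta_plus" unfolding \<phi>_def using PI_DP[OF zP bS] .
  have phiH0: "wconv \<phi> H0 sequentially"
    by (rule conv_inverse_H0[OF phiD]) (use mm in \<open>simp add: \<phi>_def b_def\<close>)
  have dP: "\<And>k. delta_map S D (b k) \<in> PI" using delta_PI bS by blast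
  have phi_dd: "\<phi> k = DDS (z k) (delta_map S D (b k))" for k
    unfolding \<phi>_def using DD_delta[OF zP bS] by simp
  have bc: "pm_cauchy S D b"
    unfolding pm_cauchy_def
  proof (intro conjI allI bS)
    define Gs where "Gs = (\<lambda>(k, l). T (\<phi> k) (T (DDS (z k) (z l)) (\<phi> l)))"
    have GsD: "Gs i \<in> Delta_plus" for i unfolding Gs_def using phiD Tp DD_DP zP by (cases i) auto
    have convG: "wconv Gs H0 (sequentially \<times>\<^sub>F sequentially)"
    proof -
      have a1: "wconv (\<lambda>i. \<phi> (fst i)) H0 (sequentially \<times>\<^sub>F sequentially)"
        by (rule wconv_compose[OF phiH0 filterlim_fst])
      have a2: "wconv (\<lambda>i. \<phi> (snd i)) H0 (sequentially \<times>\<^sub>F sequentially)"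
        by (rule wconv_compose[OF phiH0 filterlim_snd])
      have a3: "wconv (\<lambda>i. DDS (z (fst i)) (z (snd i))) H0 (sequentially \<times>\<^sub>F sequentially)"
        using zc by (simp add: pm_cauchy_def split_def)
      have "wconv (\<lambda>i. T (DDS (z (fst i)) (z (snd i))) (\<phi> (snd i))) H0 (sequentially \<times>\<^sub>F sequentially)"
        by (rule T_H0_lim[OF _ _ a3 a2]) (use DD_DP zP phiD in auto)
      then have "wconv (\<lambda>i. T (\<phi> (fst i)) (T (DDS (z (fst i)) (z (snd i))) (\<phi> (snd i)))) H0 (sequentially \<times>\<^sub>F sequentially)"
        by (intro T_H0_lim[OF _ _ a1]) (use DD_DP zP phiD Tp in auto)
      then show ?thesis by (simp add: Gs_def split_def)
    qed
    have leG: "Gs i \<le> (\<lambda>(n, p). D (b n) (b p)) i" for i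
    proof (cases i)
      case (Pair k l)
      have "T (\<phi> k) (T (DDS (z k) (z l)) (\<phi> l)) = T (DDS (delta_map S D (b k)) (z k)) (T (DDS (z k) (z l)) (DDS (z l) (delta_map S D (b l))))"
        using phi_dd DD_sym dP zP by metis
      also have "\<dots> \<le> T (DDS (delta_map S D (b k)) (z k)) (DDS (z k) (delta_map S D (b l)))"
        by (rule Tmono) (use DD_DP dP zP Tp DD_tri in auto)
      also have "\<dots> \<le> DDS (delta_map S D (b k)) (delta_map S D (b l))"
        using DD_tri dP zP by blast
      also have "\<dots> = D (b k) (b l)" using delta_delta bS by blast
      finally have "T (\<phi> k) (T (DDS (z k) (z l)) (\<phi> l)) \<le> D (b k) (b l)" .
      then show ?thesis by (simp only: Gs_def Pair case_prod_conv)
    qed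
    have FD: "(\<lambda>(n, p). D (b n) (b p)) i \<in> Delta_plus" for i using Dp bS by (cases i) simp
    show "wconv (\<lambda>(n, p). D (b n) (b p)) H0 (sequentially \<times>\<^sub>F sequentially)"
      by (rule wconv_H0_squeeze[OF FD GsD convG always_eventually]) (use leG in blast)
  qed
  define f where "f = restrict (\<lambda>x. SOME K. K \<in> Delta_plus \<and> wconv (\<lambda>n. D (b n) x) K sequentially) S"
  have fx: "f x \<in> Delta_plus \<and> wconv (\<lambda>n. D (b n) x) (f x) sequentially" if x: "x \<in> S" for x
  proof -
    have "\<exists>K. K \<in> Delta_plus \<and> wconv (\<lambda>n. D (b n) x) K sequentially"
      using cauchy_lim_exists[OF bc x] by blast
    then have "(SOME K. K \<in> Delta_plus \<and> wconv (\<lambda>n. D (b n) x) K sequentially) \<in> Delta_plus \<and>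
        wconv (\<lambda>n. D (b n) x) (SOME K. K \<in> Delta_plus \<and> wconv (\<lambda>n. D (b n) x) K sequentially) sequentially"
      by (rule someI_ex)
    then show ?thesis unfolding f_def using x by simp
  qed
  have wf: "wit f b" unfolding wit_def using bc fx by blast
  have fP: "f \<in> PI" by (rule PiI[OF _ _ wf]) (use fx in \<open>auto simp: f_def\<close>)
  have "wconv (\<lambda>k. DDS (z k) f) H0 sequentially"
  proof (rule wconv_H0_squeeze[of _ "\<lambda>k. T (\<phi> k) (f (b k))"])
    show "\<And>k. DDS (z k) f \<in> Delta_plus" using DD_DP zP fP by blast
    show "\<And>k. T (\<phi> k) (f (b k)) \<in> Delta_plus" using Tp phiD PI_DP[OF fP bS] by blast
    show "wconv (\<lambda>k. T (\<phi> k) (f (b k))) H0 sequentially"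
      by (rule T_H0_lim[OF phiD PI_DP[OF fP bS] phiH0 wit_H0[OF wf PI_DP[OF fP]]])
    show "eventually (\<lambda>k. T (\<phi> k) (f (b k)) \<le> DDS (z k) f) sequentially"
    proof (intro always_eventually allI)
      fix k
      have "T (\<phi> k) (f (b k)) = T (DDS (z k) (delta_map S D (b k))) (DDS (delta_map S D (b k)) f)"
        using phi_dd DD_delta[OF fP bS] DD_sym[OF fP dP] by simp
      also have "\<dots> \<le> DDS (z k) f" using DD_tri zP dP fP by blast
      finally show "T (\<phi> k) (f (b k)) \<le> DDS (z k) f" .
    qed
  qed
  then show "\<exists>x\<in>PI. wconv (\<lambda>n. DDS (z n) x) H0 sequentially" using fP by blast
qed


end

theorem mainTheorem12:
  fixes G :: "('a, 'b) monoid_scheme"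
    and D :: "'a \<Rightarrow> 'a \<Rightarrow> dfun"
    and T :: "dfun \<Rightarrow> dfun \<Rightarrow> dfun"
  assumes "inv_pm_group G D T"
    and "continuous_tf T"
  shows "(\<forall>f\<in>Pi_set (carrier G) D T. \<forall>g\<in>Pi_set (carrier G) D T.
            odot G T f g \<in> Pi_set (carrier G) D T)
    \<and> inv_pm_group (Pi_group G D T) (DD (carrier G) T) T
    \<and> pm_complete (Pi_set (carrier G) D T) (DD (carrier G) T)
    \<and> \<one>\<^bsub>Pi_group G D T\<^esub> = delta_map (carrier G) D \<one>\<^bsub>G\<^esub>"
proof -
  interpret pmg G D T using assms by (unfold_locales)
  show ?thesis using OD_closed PI_inv_pm_group PI_complete by (simp add: Pi_group_def)
qed


end
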